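(* Let $\pi$ be a matching of size $n$ with associated sequence $a_1<\dots<a_n$, and for an integer $p$ let $D_\pi(p)=\det_{1\le i,j\le n}\left[\binom{p+i-1}{a_i-j}\right]$. Then: (i) if $p\ge0$, $D_\pi(p)$ equals the number of fillings of $Y(\pi)$ with integers in $\{1,\dots,p+n-1\}$ that are strictly increasing along rows (left to right) and along columns (top to bottom); in particular $D_\pi(p)>0$; (ii) if $p\le-n$, $(-1)^{d(\pi)}D_\pi(p)$ equals the number of fillings of $Y(\pi)$ with integers in $\{0,1,\dots,|p|-n\}$ that are weakly increasing along rows and along columns; in particular $D_\pi(p)\neq0$, and $D_\pi(-n)=(-1)^{d(\pi)}$; (iii) if $1-n\le p\le -1$ and $\pi$ is not of the form $(\rho)_{|p|}$ for a matching $\rho$, then $D_\pi(p)=0$.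
   Context: A matching of size $n$ is a set of $n$ disjoint noncrossing pairs (arches) partitioning $\{1,\dots,2n\}$; $a_1<\dots<a_n$ are the smaller elements of its arches. The Young diagram $Y(\pi)$ has rows, from top to bottom, of lengths $a_n-n\ge\dots\ge a_1-1$; $d(\pi)=\sum_i(a_i-i)$ is its number of boxes. $(\rho)_q$ denotes the matching $\rho$ (of size $m$) surrounded by $q$ nested arches: arches $\{i,2m+2q+1-i\}$ for $1\le i\le q$ and $\{q+i,q+j\}$ for $\{i,j\}\in\rho$ (here $\rho$ may be the empty matching). Binomial coefficients are generalized: for an integer $x$ and integer $k$, $\binom{x}{k}=x(x-1)\cdots(x-k+1)/k!$ if $k\ge0$ and $\binom{x}{k}=0$ if $k<0$. *)

theory Defs
  imports Main "Jordan_Normal_Form.Determinant"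
begin

definition is_matching :: "nat \<Rightarrow> (nat \<times> nat) set \<Rightarrow> bool" where
  "is_matching n M \<longleftrightarrow>
     M \<subseteq> {(i,j). 1 \<le> i \<and> i < j \<and> j \<le> 2*n} \<and>
     (\<forall>x\<in>{1..2*n}. card {e\<in>M. fst e = x \<or> snd e = x} = 1) \<and>
     (\<forall>(a,b)\<in>M. \<forall>(c,d)\<in>M. \<not> (a < c \<and> c < b \<and> b < d))"

text \<open>The k-th smallest opener a_k (1-based index k).\<close>
definition opener :: "(nat \<times> nat) set \<Rightarrow> nat \<Rightarrow> nat" where
  "opener M k = sorted_list_of_set (fst ` M) ! (k - 1)"

definition young :: "nat \<Rightarrow> (nat \<times> nat) set \<Rightarrow> (nat \<times> nat) set" where
  "young n M = {(r,c). 1 \<le> r \<and> r \<le> n \<and> 1 \<le> c \<and> c \<le> opener M (n+1-r) - (n+1-r)}"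

definition dpi :: "nat \<Rightarrow> (nat \<times> nat) set \<Rightarrow> nat" where
  "dpi n M = (\<Sum>i=1..n. opener M i - i)"

definition gbin :: "int \<Rightarrow> int \<Rightarrow> int" where
  "gbin x k = (if k < 0 then 0 else (\<Prod>i<nat k. x - int i) div fact (nat k))"

text \<open>D_pi(p) = det [binom(p+i-1, a_i - j)]_{1<=i,j<=n}; matrix indices are 0-based.\<close>
definition Dpi :: "nat \<Rightarrow> (nat \<times> nat) set \<Rightarrow> int \<Rightarrow> int" where
  "Dpi n M p = det (mat n n (\<lambda>(i,j). gbin (p + int i) (int (opener M (i+1)) - int (j+1))))"

definition strict_fillings :: "(nat \<times> nat) set \<Rightarrow> int \<Rightarrow> int \<Rightarrow> ((nat \<times> nat) \<Rightarrow> int) set" where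
  "strict_fillings Y lo hi = {f. (\<forall>x. x \<notin> Y \<longrightarrow> f x = 0) \<and> (\<forall>x\<in>Y. f x \<in> {lo..hi}) \<and>
     (\<forall>r c c'. (r,c) \<in> Y \<and> (r,c') \<in> Y \<and> c < c' \<longrightarrow> f (r,c) < f (r,c')) \<and>
     (\<forall>r r' c. (r,c) \<in> Y \<and> (r',c) \<in> Y \<and> r < r' \<longrightarrow> f (r,c) < f (r',c))}"

definition weak_fillings :: "(nat \<times> nat) set \<Rightarrow> int \<Rightarrow> int \<Rightarrow> ((nat \<times> nat) \<Rightarrow> int) set" where
  "weak_fillings Y lo hi = {f. (\<forall>x. x \<notin> Y \<longrightarrow> f x = 0) \<and> (\<forall>x\<in>Y. f x \<in> {lo..hi}) \<and>
     (\<forall>r c c'. (r,c) \<in> Y \<and> (r,c') \<in> Y \<and> c < c' \<longrightarrow> f (r,c) \<le> f (r,c')) \<and>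
     (\<forall>r r' c. (r,c) \<in> Y \<and> (r',c) \<in> Y \<and> r < r' \<longrightarrow> f (r,c) \<le> f (r',c))}"

definition surround :: "nat \<Rightarrow> nat \<Rightarrow> (nat \<times> nat) set \<Rightarrow> (nat \<times> nat) set" where
  "surround q m \<rho> = {(i, 2*m + 2*q + 1 - i) | i. 1 \<le> i \<and> i \<le> q} \<union> {(q+i, q+j) | i j. (i,j) \<in> \<rho>}"

end

theory Submission
  imports Defs
begin


lemma gbin_nat: "gbin x (int m) = (\<Prod>i=0..<m. x - int i) div fact m"
  by (simp add: gbin_def atLeast0LessThan)

lemma gbin_neg[simp]: "k < 0 \<Longrightarrow> gbin x k = 0"
  by (simp add: gbin_def)

lemma gbin_k0[simp]: "gbin x 0 = 1"
  by (simp add: gbin_def)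

lemma gbin_pascal: "gbin (x + 1) k = gbin x k + gbin x (k - 1)"
proof (cases "k < 0")
  case True then show ?thesis by simp
next
  case False
  show ?thesis
  proof (cases "k = 0")
    case True then show ?thesis by simp
  next
    case False
    define m where "m = nat k - 1"
    have m: "k = int (Suc m)" using False \<open>\<not> k < 0\<close> unfolding m_def by simp
    then have m2: "k - 1 = int m" by simp
    show ?thesis using gbinomial_int_Suc_Suc[of x m] unfolding gbinomial_prod_rev m2 m gbin_nat
      by (simp add: gbin_nat)
  qed
qed

lemma gbin_zero_big: "0 \<le> x \<Longrightarrow> x < k \<Longrightarrow> gbin x k = 0"
proof -
  assume a: "0 \<le> x" "x < k"
  define m where "m = nat k"
  have m: "k = int m" using a unfolding m_def by simp
  show ?thesis using zbinomial_eq_0_iff[of x m] a unfolding gbinomial_prod_rev m gbin_nat by simp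
qed

lemma gbin_0_left: "gbin 0 k = (if k = 0 then 1 else 0)"
proof (cases "k < 0")
  case False
  define m where "m = nat k"
  have m: "k = int m" using False unfolding m_def by simp
  show ?thesis using gbinomial_0_left[of m, where 'a=int] unfolding gbinomial_prod_rev m gbin_nat
    by simp
qed simp

lemma gbin_negtop: "gbin x (int m) = (-1) ^ m * gbin (int m - x - 1) (int m)"
  using gbinomial_int_negated_upper[of x m] unfolding gbinomial_prod_rev gbin_nat by simp

definition detf :: "nat \<Rightarrow> (nat \<Rightarrow> nat \<Rightarrow> int) \<Rightarrow> int" where
  "detf n F = det (mat n n (\<lambda>(i,j). F i j))"

lemma perm_lt: "p permutes {0..<(n::nat)} \<Longrightarrow> i < n \<Longrightarrow> p i < n"
  using permutes_in_image[of p "{0..<n}" i] by auto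

lemma detf_leib: "detf n F = (\<Sum>p\<in>{p. p permutes {0..<n}}. signof p * (\<Prod>i=0..<n. F i (p i)))"
proof -
  have "detf n F = (\<Sum>p\<in>{p. p permutes {0..<n}}. signof p * (\<Prod>i=0..<n. mat n n (\<lambda>(i,j). F i j) $$ (i, p i)))"
    unfolding detf_def by (rule det_def') simp
  also have "\<dots> = (\<Sum>p\<in>{p. p permutes {0..<n}}. signof p * (\<Prod>i=0..<n. F i (p i)))"
  proof (intro sum.cong refl arg_cong[where f="\<lambda>x. signof _ * x"] prod.cong)
    fix p i assume "p \<in> {p. p permutes {0..<n}}" "i \<in> {0..<n}"
    then show "mat n n (\<lambda>(i,j). F i j) $$ (i, p i) = F i (p i)" using perm_lt[of p n i] by auto
  qed
  finally show ?thesis .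
qed

lemma detf_cong: "(\<And>i j. i < n \<Longrightarrow> j < n \<Longrightarrow> F i j = G i j) \<Longrightarrow> detf n F = detf n G"
  unfolding detf_def by (intro arg_cong[where f=det] eq_matI) auto

lemma detf_row_add:
  assumes k: "k < n"
    and o: "\<And>i j. i < n \<Longrightarrow> i \<noteq> k \<Longrightarrow> G i j = F i j \<and> H i j = F i j"
    and r: "\<And>j. F k j = G k j + H k j"
  shows "detf n F = detf n G + detf n H"
proof -
  have "\<And>p. p permutes {0..<n} \<Longrightarrow> (\<Prod>i=0..<n. F i (p i)) = (\<Prod>i=0..<n. G i (p i)) + (\<Prod>i=0..<n. H i (p i))"
  proof -
    fix p assume p: "p permutes {0..<n}"
    have kk: "k \<in> {0..<n}" using k by simp
    have e1: "(\<Prod>i\<in>{0..<n}-{k}. G i (p i)) = (\<Prod>i\<in>{0..<n}-{k}. F i (p i))"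
      by (intro prod.cong) (auto simp: o)
    have e2: "(\<Prod>i\<in>{0..<n}-{k}. H i (p i)) = (\<Prod>i\<in>{0..<n}-{k}. F i (p i))"
      by (intro prod.cong) (auto simp: o)
    show "(\<Prod>i=0..<n. F i (p i)) = (\<Prod>i=0..<n. G i (p i)) + (\<Prod>i=0..<n. H i (p i))"
      unfolding prod.remove[OF finite_atLeastLessThan kk] e1 e2 r by (simp add: algebra_simps)
  qed
  then show ?thesis unfolding detf_leib
    by (simp add: sum.distrib[symmetric] algebra_simps)
qed

lemma detf_zero_terms:
  assumes "\<And>p. p permutes {0..<n} \<Longrightarrow> \<exists>i<n. F i (p i) = 0"
  shows "detf n F = 0"
proof -
  have "\<forall>p\<in>{p. p permutes {0..<n}}. signof p * (\<Prod>i=0..<n. F i (p i)) = 0"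
  proof
    fix p assume "p \<in> {p. p permutes {0..<n}}"
    then obtain i where "i < n" "F i (p i) = 0" using assms by auto
    then have "(\<Prod>i=0..<n. F i (p i)) = 0" by (intro prod_zero) auto
    then show "signof p * (\<Prod>i=0..<n. F i (p i)) = 0" by simp
  qed
  then show ?thesis unfolding detf_leib by (rule sum.neutral)
qed

lemma detf_zero_row:
  assumes k: "k < n" and z: "\<And>j. j < n \<Longrightarrow> F k j = 0"
  shows "detf n F = 0"
  by (rule detf_zero_terms) (use k z perm_lt in blast)

lemma detf_equal_rows:
  assumes "i < n" "j < n" "i \<noteq> j" and e: "\<And>l. l < n \<Longrightarrow> F i l = F j l"
  shows "detf n F = 0"
  unfolding detf_def
  by (rule det_identical_rows[of _ n i j]) (use assms in \<open>auto intro: eq_vecI\<close>)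

lemma detf_pigeon:
  assumes k: "k < n" and z: "\<And>i j. k \<le> i \<Longrightarrow> i < n \<Longrightarrow> j \<le> k \<Longrightarrow> F i j = 0"
  shows "detf n F = 0"
proof (rule detf_zero_terms)
  fix p assume p: "p permutes {0..<n}"
  have "\<exists>i\<in>{k..<n}. p i \<le> k"
  proof (rule ccontr)
    assume "\<not> ?thesis"
    then have "p ` {k..<n} \<subseteq> {Suc k..<n}" using perm_lt[OF p] by force
    moreover have "inj_on p {k..<n}" using p by (meson permutes_inj inj_on_subset subset_UNIV)
    ultimately have "card {k..<n} \<le> card {Suc k..<n}"
      by (metis card_image card_mono finite_atLeastLessThan)
    then show False using k by simp
  qed
  then obtain i where "i \<in> {k..<n}" "p i \<le> k" by blast
  then show "\<exists>i<n. F i (p i) = 0" using z by auto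
qed

lemma detf_id: "detf n (\<lambda>i j. if i = j then 1 else 0) = 1"
proof -
  have "mat n n (\<lambda>(i,j). if i = j then 1 else 0) = (1\<^sub>m n :: int mat)"
    by (rule eq_matI) auto
  then show ?thesis unfolding detf_def by simp
qed

lemma detf_scale:
  "detf n (\<lambda>i j. c i * d j * F i j) = (\<Prod>i<n. c i) * (\<Prod>j<n. d j) * detf n F"
proof -
  have "\<And>p. p permutes {0..<n} \<Longrightarrow> (\<Prod>i=0..<n. c i * d (p i) * F i (p i)) =
     (\<Prod>i<n. c i) * (\<Prod>j<n. d j) * (\<Prod>i=0..<n. F i (p i))"
  proof -
    fix p assume p: "p permutes {0..<n}"
    have "(\<Prod>i=0..<n. d (p i)) = (\<Prod>j=0..<n. d j)"
      using prod.permute[OF p, of d] by (simp add: comp_def)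
    then show "(\<Prod>i=0..<n. c i * d (p i) * F i (p i)) =
     (\<Prod>i<n. c i) * (\<Prod>j<n. d j) * (\<Prod>i=0..<n. F i (p i))"
      by (simp add: prod.distrib atLeast0LessThan)
  qed
  then show ?thesis unfolding detf_leib
    by (simp add: sum_distrib_left algebra_simps)
qed


definition Yd :: "nat \<Rightarrow> (nat \<Rightarrow> int) \<Rightarrow> (nat \<times> nat) set" where
  "Yd n A = {(r,c). 1 \<le> r \<and> r \<le> n \<and> 1 \<le> c \<and> int c \<le> A (n - r) - int (n - r) - 1}"

lemma Yd_mem: "(r,c) \<in> Yd n A \<longleftrightarrow> 1 \<le> r \<and> r \<le> n \<and> 1 \<le> c \<and> int c \<le> A (n - r) - int (n - r) - 1"
  by (simp add: Yd_def)

lemma Yd_finite: "finite (Yd n A)"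
proof -
  have "Yd n A \<subseteq> (SIGMA r:{1..n}. {1..nat (A (n - r))})"
    by (auto simp: Yd_def)
  then show ?thesis by (rule finite_subset) auto
qed

definition inc :: "nat \<Rightarrow> (nat \<Rightarrow> int) \<Rightarrow> bool" where
  "inc n A \<longleftrightarrow> (\<forall>i. Suc i < n \<longrightarrow> A i < A (Suc i)) \<and> (0 < n \<longrightarrow> 1 \<le> A 0)"

lemma inc_gap: assumes "inc n A" "i \<le> j" "j < n" shows "A j - A i \<ge> int (j - i)"
  using assms(2,3)
proof (induction j)
  case 0 then show ?case by simp
next
  case (Suc j)
  show ?case
  proof (cases "i = Suc j")
    case True then show ?thesis by simp
  next
    case False
    then have "i \<le> j" using Suc by simp
    then have "A j - A i \<ge> int (j - i)" using Suc by simp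
    moreover have "A j < A (Suc j)" using assms(1) Suc unfolding inc_def by simp
    ultimately show ?thesis using \<open>i \<le> j\<close> by (simp add: of_nat_diff)
  qed
qed

lemma inc_ge: assumes "inc n A" "i < n" shows "A i \<ge> int i + 1"
proof -
  have "A i - A 0 \<ge> int (i - 0)" by (rule inc_gap) (use assms in auto)
  moreover have "A 0 \<ge> 1" using assms unfolding inc_def by auto
  ultimately show ?thesis by simp
qed

lemma inc_Lmono: assumes "inc n A" "i \<le> j" "j < n"
  shows "A i - int i \<le> A j - int j"
  using inc_gap[OF assms] assms(2) by (simp add: of_nat_diff)

definition SFt :: "nat \<Rightarrow> (nat \<Rightarrow> int) \<Rightarrow> (nat \<Rightarrow> int) \<Rightarrow> ((nat \<times> nat) \<Rightarrow> int) set" where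
  "SFt n A t = {f. (\<forall>x. x \<notin> Yd n A \<longrightarrow> f x = 0) \<and>
     (\<forall>x\<in>Yd n A. f x \<in> {1 .. t (n - fst x) + int (fst x) - 1}) \<and>
     (\<forall>r c c'. (r,c) \<in> Yd n A \<and> (r,c') \<in> Yd n A \<and> c < c' \<longrightarrow> f (r,c) < f (r,c')) \<and>
     (\<forall>r r' c. (r,c) \<in> Yd n A \<and> (r',c) \<in> Yd n A \<and> r < r' \<longrightarrow> f (r,c) < f (r',c))}"

lemma finite_bounded_funs:
  assumes "finite Y" "finite B"
  shows "finite {f. (\<forall>x. x \<notin> Y \<longrightarrow> f x = (0::int)) \<and> (\<forall>x\<in>Y. f x \<in> B)}"
proof -
  have "{f. (\<forall>x. x \<notin> Y \<longrightarrow> f x = (0::int)) \<and> (\<forall>x\<in>Y. f x \<in> B)} \<subseteq>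
        {f. \<forall>x. (x \<in> Y \<longrightarrow> f x \<in> B) \<and> (x \<notin> Y \<longrightarrow> f x = 0)}" by auto
  then show ?thesis using finite_set_of_finite_funs[OF assms] by (rule finite_subset)
qed

lemma SFt_finite: "finite (SFt n A t)"
proof -
  let ?B = "\<Union>x\<in>Yd n A. {1 .. t (n - fst x) + int (fst x) - 1}"
  have "SFt n A t \<subseteq> {f. (\<forall>x. x \<notin> Yd n A \<longrightarrow> f x = (0::int)) \<and> (\<forall>x\<in>Yd n A. f x \<in> ?B)}"
    unfolding SFt_def by blast
  moreover have "finite ?B" using Yd_finite by auto
  ultimately show ?thesis using finite_bounded_funs[OF Yd_finite] finite_subset by blast
qed

definition Gd :: "nat \<Rightarrow> (nat \<Rightarrow> int) \<Rightarrow> (nat \<Rightarrow> int) \<Rightarrow> int" where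
  "Gd n A t = detf n (\<lambda>i j. gbin (t i) (A i - int (j+1)))"

definition stepU :: "nat \<Rightarrow> (nat \<Rightarrow> int) \<Rightarrow> bool" where
  "stepU n t \<longleftrightarrow> (\<forall>i<n. 0 \<le> t i) \<and> (\<forall>i. Suc i < n \<longrightarrow> t (Suc i) = t i \<or> t (Suc i) = t i + 1)"

lemma stepU_mono: assumes "stepU n t" "i \<le> j" "j < n" shows "t i \<le> t j"
  using assms(2,3)
proof (induction j)
  case 0 then show ?case by simp
next
  case (Suc j)
  then show ?case
    using assms(1) unfolding stepU_def
    by (metis Suc_lessD le_Suc_eq order.trans order_refl add_increasing2 zero_le_one)
qed


lemma strict_step:
  fixes n i :: nat and A t :: "nat \<Rightarrow> int" and T :: int
  assumes incA: "inc n A" and st: "stepU n t" and i: "i < n" and T1: "1 \<le> T"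
    and ti: "\<And>j. i \<le> j \<Longrightarrow> j < n \<Longrightarrow> t j = T"
    and tim: "0 < i \<Longrightarrow> t (i - 1) = T - 1"
    and t'_def: "t' = t(i := T - 1)" and A'_def: "A' = A(i := A i - 1)"
    and Z_def: "Z = ((i = 0 \<and> A 0 = 1) \<or> (0 < i \<and> A (i-1) = A i - 1))"
  shows "Gd n A t = Gd n A t' + Gd n A' t'"
    and "Z \<Longrightarrow> Gd n A' t' = 0"
    and "card (SFt n A t) = card (SFt n A t') + (if Z then 0 else card (SFt n A' t'))"
proof -
  show "Gd n A t = Gd n A t' + Gd n A' t'"
    unfolding Gd_def
  proof (rule detf_row_add[OF i])
    fix a j assume "a < n" "a \<noteq> i"
    then show "gbin (t' a) (A a - int (j + 1)) = gbin (t a) (A a - int (j + 1)) \<and>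
               gbin (t' a) (A' a - int (j + 1)) = gbin (t a) (A a - int (j + 1))"
      unfolding t'_def A'_def by simp
  next
    fix j
    have "gbin (T - 1 + 1) (A i - int (j + 1)) = gbin (T - 1) (A i - int (j + 1)) + gbin (T - 1) (A i - int (j + 1) - 1)"
      by (rule gbin_pascal)
    then show "gbin (t i) (A i - int (j + 1)) = gbin (t' i) (A i - int (j + 1)) + gbin (t' i) (A' i - int (j + 1))"
      using ti[of i] i unfolding t'_def A'_def by (simp add: algebra_simps)
  qed
next
  assume Z: Z
  show "Gd n A' t' = 0"
  proof (cases "i = 0")
    case True
    then have "A 0 = 1" using Z unfolding Z_def by simp
    show ?thesis unfolding Gd_def
      by (rule detf_zero_row[of 0]) (use i True \<open>A 0 = 1\<close> in \<open>auto simp: A'_def\<close>)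
  next
    case False
    then have a: "A (i-1) = A i - 1" using Z unfolding Z_def by simp
    show ?thesis unfolding Gd_def
      by (rule detf_equal_rows[of "i-1" n i]) (use i False a tim in \<open>auto simp: A'_def t'_def\<close>)
  qed
next
  define r where "r = n - i"
  define L where "L = A i - int i - 1"
  define hi where "hi = T + int r - 1"
  have r1: "1 \<le> r" "r \<le> n" "n - r = i" using i unfolding r_def by auto
  have rowr: "\<And>r''. r'' \<le> n \<Longrightarrow> n - r'' = i \<longleftrightarrow> r'' = r" using i unfolding r_def by auto
  have tr: "t (n - r) + int r - 1 = hi" using r1 ti[of i] i unfolding hi_def by simp
  have t'r: "t' (n - r) + int r - 1 = hi - 1" using r1 unfolding hi_def t'_def by simp
  have t'o: "\<And>r''. r'' \<le> n \<Longrightarrow> r'' \<noteq> r \<Longrightarrow> t' (n - r'') = t (n - r'')"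
    using rowr unfolding t'_def by simp
  let ?Y = "Yd n A"
  have Lmono: "\<And>r1 r2 c. (r2, c) \<in> ?Y \<Longrightarrow> 1 \<le> r1 \<Longrightarrow> r1 \<le> r2 \<Longrightarrow> 1 \<le> c \<Longrightarrow> (r1, c) \<in> ?Y"
  proof -
    fix r1 r2 c assume a: "(r2, c) \<in> ?Y" "1 \<le> r1" "r1 \<le> r2" "1 \<le> c"
    have "A (n - r2) - int (n - r2) \<le> A (n - r1) - int (n - r1)"
      by (rule inc_Lmono[OF incA]) (use a in \<open>auto simp: Yd_mem\<close>)
    then show "(r1, c) \<in> ?Y" using a by (auto simp: Yd_mem)
  qed
  define U where "U = {f \<in> SFt n A t. 1 \<le> L \<and> f (r, nat L) = hi}"
  define N where "N = {f \<in> SFt n A t. \<not> (1 \<le> L \<and> f (r, nat L) = hi)}"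
  have split: "SFt n A t = U \<union> N" "U \<inter> N = {}" unfolding U_def N_def by auto
  have fU: "finite U" "finite N" using SFt_finite unfolding U_def N_def by auto
  have cardsplit: "card (SFt n A t) = card U + card N"
    using card_Un_disjoint[OF fU split(2)] split(1) by simp
  have rc_in: "1 \<le> L \<Longrightarrow> (r, nat L) \<in> ?Y" using r1 unfolding L_def by (auto simp: Yd_mem)
  have rowbound: "\<And>c. (r, c) \<in> ?Y \<Longrightarrow> int c \<le> L" using r1 unfolding L_def by (auto simp: Yd_mem)
  have N_eq: "N = SFt n A t'"
  proof
    show "N \<subseteq> SFt n A t'"
    proof
      fix f assume fN: "f \<in> N"
      then have f: "f \<in> SFt n A t" and nu: "\<not> (1 \<le> L \<and> f (r, nat L) = hi)" unfolding N_def by auto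
      have "\<forall>x\<in>?Y. f x \<in> {1 .. t' (n - fst x) + int (fst x) - 1}"
      proof
        fix x assume x: "x \<in> ?Y"
        obtain r'' c where xe: "x = (r'', c)" by (cases x)
        have b: "f x \<in> {1 .. t (n - r'') + int r'' - 1}" using f x xe unfolding SFt_def by auto
        show "f x \<in> {1 .. t' (n - fst x) + int (fst x) - 1}"
        proof (cases "r'' = r")
          case False
          then show ?thesis using b t'o[of r''] x xe by (auto simp: Yd_mem)
        next
          case True
          have Lc: "int c \<le> L" "1 \<le> c" using rowbound x xe True by (auto simp: Yd_mem)
          have inL: "(r, nat L) \<in> ?Y" using rc_in Lc by simp
          have le: "f (r, nat L) \<le> hi" using f inL tr unfolding SFt_def by force
          have "f (r, c) \<le> hi - 1"
          proof (cases "int c = L")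
            case True
            then have "c = nat L" by simp
            then show ?thesis using le nu Lc by simp
          next
            case False
            then have "c < nat L" using Lc by simp
            then have "f (r, c) < f (r, nat L)" using f x xe True inL unfolding SFt_def by blast
            then show ?thesis using le by simp
          qed
          then show ?thesis using b True xe t'r by simp
        qed
      qed
      then show "f \<in> SFt n A t'" using f unfolding SFt_def by blast
    qed
  next
    show "SFt n A t' \<subseteq> N"
    proof
      fix f assume f: "f \<in> SFt n A t'"
      have "\<forall>x\<in>?Y. f x \<in> {1 .. t (n - fst x) + int (fst x) - 1}"
      proof
        fix x assume x: "x \<in> ?Y"
        obtain r'' c where xe: "x = (r'', c)" by (cases x)
        have b: "f x \<in> {1 .. t' (n - r'') + int r'' - 1}" using f x xe unfolding SFt_def by auto
        show "f x \<in> {1 .. t (n - fst x) + int (fst x) - 1}"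
          using b t'o[of r''] x xe t'r tr by (cases "r'' = r") (auto simp: Yd_mem)
      qed
      moreover have "\<not> (1 \<le> L \<and> f (r, nat L) = hi)"
      proof
        assume a: "1 \<le> L \<and> f (r, nat L) = hi"
        then have "f (r, nat L) \<le> hi - 1" using f rc_in t'r unfolding SFt_def by force
        then show False using a by simp
      qed
      ultimately show "f \<in> N" using f unfolding N_def SFt_def by blast
    qed
  qed
  show "card (SFt n A t) = card (SFt n A t') + (if Z then 0 else card (SFt n A' t'))"
  proof (cases Z)
    case True
    have "U = {}"
    proof (rule ccontr)
      assume "U \<noteq> {}"
      then obtain f where f: "f \<in> SFt n A t" "1 \<le> L" "f (r, nat L) = hi" unfolding U_def by auto
      show False
      proof (cases "i = 0")
        case True
        then show False using \<open>Z\<close> f(2) unfolding Z_def L_def by simp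
      next
        case False
        then have a: "A (i-1) = A i - 1" using \<open>Z\<close> unfolding Z_def by simp
        have rr: "n - Suc r = i - 1" "Suc r \<le> n" using False i unfolding r_def by auto
        have in2: "(Suc r, nat L) \<in> ?Y" using rr a f(2) False unfolding L_def
          by (auto simp: Yd_mem of_nat_diff)
        have "f (r, nat L) < f (Suc r, nat L)" using f(1) in2 rc_in[OF f(2)] unfolding SFt_def by blast
        moreover have "f (Suc r, nat L) \<le> t (n - Suc r) + int (Suc r) - 1"
          using f(1) in2 unfolding SFt_def by force
        ultimately show False using f(3) rr tim False unfolding hi_def by simp
      qed
    qed
    then show ?thesis using cardsplit N_eq True by simp
  next
    case False
    have L1: "1 \<le> L"
    proof (cases "i = 0")
      case True
      then have "A 0 \<noteq> 1" using False unfolding Z_def by simp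
      then show ?thesis using inc_ge[OF incA i] True unfolding L_def by simp
    next
      case F: False
      then have "A (i - 1) \<noteq> A i - 1" using False unfolding Z_def by simp
      moreover have "A (i-1) < A i" using incA i F unfolding inc_def
        by (metis Suc_pred' bot_nat_0.not_eq_extremum)
      moreover have "A (i-1) \<ge> int (i - 1) + 1" using inc_ge[OF incA] i by simp
      ultimately show ?thesis using F unfolding L_def by (simp add: of_nat_diff)
    qed
    have nextrow: "\<And>c. (Suc r, c) \<in> ?Y \<Longrightarrow> int c < L"
    proof -
      fix c assume a: "(Suc r, c) \<in> ?Y"
      then have F: "0 < i" "n - Suc r = i - 1" using r1 unfolding r_def by (auto simp: Yd_mem)
      then have "A (i - 1) \<noteq> A i - 1" using False unfolding Z_def by simp
      moreover have "A (i-1) < A i" using incA i F unfolding inc_def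
        by (metis Suc_pred')
      ultimately have "A (i-1) < A i - 1" by simp
      then show "int c < L" using a F unfolding L_def by (auto simp: Yd_mem of_nat_diff)
    qed
    have Y'eq: "Yd n A' = ?Y - {(r, nat L)}"
    proof (rule Set.set_eqI)
      fix x :: "nat \<times> nat"
      obtain r'' c where xe: "x = (r'', c)" by (cases x)
      show "x \<in> Yd n A' \<longleftrightarrow> x \<in> ?Y - {(r, nat L)}"
      proof (cases "r'' = r")
        case True
        then show ?thesis using xe r1 L1 unfolding A'_def L_def by (auto simp: Yd_mem)
      next
        case False
        then have "r'' \<le> n \<Longrightarrow> n - r'' \<noteq> i" using rowr by simp
        then show ?thesis using xe False unfolding A'_def by (auto simp: Yd_mem)
      qed
    qed
    let ?p = "(r, nat L)"
    define res where "res = (\<lambda>f::nat\<times>nat\<Rightarrow>int. f(?p := 0))"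
    define ext where "ext = (\<lambda>f::nat\<times>nat\<Rightarrow>int. f(?p := hi))"
    have pin: "?p \<in> ?Y" using rc_in L1 by simp
    have "bij_betw res U (SFt n A' t')"
    proof (rule bij_betw_byWitness[where f'=ext])
      show "\<forall>f\<in>U. ext (res f) = f" unfolding U_def ext_def res_def by auto
      show "\<forall>g\<in>SFt n A' t'. res (ext g) = g"
      proof
        fix g assume "g \<in> SFt n A' t'"
        then have "g ?p = 0" unfolding SFt_def Y'eq by auto
        then show "res (ext g) = g" unfolding res_def ext_def by auto
      qed
      show "res ` U \<subseteq> SFt n A' t'"
      proof
        fix h assume "h \<in> res ` U"
        then obtain f where fU: "f \<in> U" and h: "h = res f" by auto
        have f: "f \<in> SFt n A t" "f ?p = hi" using fU L1 unfolding U_def by auto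
        have hv: "\<And>x. x \<in> Yd n A' \<Longrightarrow> h x = f x" using h Y'eq unfolding res_def by auto
        have "\<forall>x. x \<notin> Yd n A' \<longrightarrow> h x = 0"
          using f(1) h Y'eq unfolding res_def SFt_def by auto
        moreover have "\<forall>x\<in>Yd n A'. h x \<in> {1 .. t' (n - fst x) + int (fst x) - 1}"
        proof
          fix x assume x: "x \<in> Yd n A'"
          obtain r'' c where xe: "x = (r'', c)" by (cases x)
          have xY: "x \<in> ?Y" "x \<noteq> ?p" using x Y'eq by auto
          have b: "f x \<in> {1 .. t (n - r'') + int r'' - 1}" using f(1) xY xe unfolding SFt_def by auto
          show "h x \<in> {1 .. t' (n - fst x) + int (fst x) - 1}"
          proof (cases "r'' = r")
            case False
            then show ?thesis using b hv[OF x] t'o[of r''] xY xe by (auto simp: Yd_mem)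
          next
            case True
            have "int c \<le> L" using rowbound xY xe True by simp
            then have "c \<le> nat L" by simp
            then have "c < nat L" using xY xe True by simp
            then have "f (r, c) < f ?p" using f(1) xY xe True pin unfolding SFt_def by blast
            then show ?thesis using b hv[OF x] xe True t'r f(2) by simp
          qed
        qed
        moreover have "\<forall>r c c'. (r,c) \<in> Yd n A' \<and> (r,c') \<in> Yd n A' \<and> c < c' \<longrightarrow> h (r,c) < h (r,c')"
          using f(1) hv Y'eq unfolding SFt_def by auto
        moreover have "\<forall>r r' c. (r,c) \<in> Yd n A' \<and> (r',c) \<in> Yd n A' \<and> r < r' \<longrightarrow> h (r,c) < h (r',c)"
          using f(1) hv Y'eq unfolding SFt_def by auto
        ultimately show "h \<in> SFt n A' t'" unfolding SFt_def by blast
      qed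
      show "ext ` SFt n A' t' \<subseteq> U"
      proof
        fix h assume "h \<in> ext ` SFt n A' t'"
        then obtain g where g: "g \<in> SFt n A' t'" and h: "h = ext g" by auto
        have gY: "\<And>x. x \<in> ?Y \<Longrightarrow> x \<noteq> ?p \<Longrightarrow> x \<in> Yd n A'" using Y'eq by auto
        have hv: "\<And>x. x \<noteq> ?p \<Longrightarrow> h x = g x" "h ?p = hi" using h unfolding ext_def by auto
        have gb: "\<And>r'' c. (r'', c) \<in> Yd n A' \<Longrightarrow> g (r'', c) \<in> {1 .. t' (n - r'') + int r'' - 1}"
          using g unfolding SFt_def by force
        have hi_ge: "1 \<le> hi" using T1 r1 unfolding hi_def by simp
        have below: "\<And>r'' c. (r'', c) \<in> Yd n A' \<Longrightarrow> r'' \<le> r \<Longrightarrow> g (r'', c) \<le> hi - 1"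
        proof -
          fix r'' c assume a: "(r'', c) \<in> Yd n A'" "r'' \<le> r"
          have rr: "1 \<le> r''" "r'' \<le> n" using a by (auto simp: Yd_mem)
          show "g (r'', c) \<le> hi - 1"
          proof (cases "r'' = r")
            case True then show ?thesis using gb[OF a(1)] t'r by simp
          next
            case False
            then have "i \<le> n - r''" "n - r'' < n" using a rr unfolding r_def by auto
            then have "t' (n - r'') = T" using t'o[of r''] ti rr False by simp
            then show ?thesis using gb[OF a(1)] a(2) False unfolding hi_def by simp
          qed
        qed
        have "\<forall>x. x \<notin> ?Y \<longrightarrow> h x = 0"
        proof (intro allI impI)
          fix x assume "x \<notin> ?Y"
          then have "x \<noteq> ?p" "x \<notin> Yd n A'" using pin Y'eq by auto
          moreover have "g x = 0" using g \<open>x \<notin> Yd n A'\<close> unfolding SFt_def by blast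
          ultimately show "h x = 0" using hv(1) by simp
        qed
        moreover have "\<forall>x\<in>?Y. h x \<in> {1 .. t (n - fst x) + int (fst x) - 1}"
        proof
          fix x assume x: "x \<in> ?Y"
          obtain r'' c where xe: "x = (r'', c)" by (cases x)
          show "h x \<in> {1 .. t (n - fst x) + int (fst x) - 1}"
          proof (cases "x = ?p")
            case True then show ?thesis using hv(2) hi_ge tr by simp
          next
            case False
            have b: "g x \<in> {1 .. t' (n - r'') + int r'' - 1}" using gb gY[OF x False] xe by simp
            show ?thesis using b hv(1)[OF False] t'o[of r''] t'r tr xe x
              by (cases "r'' = r") (auto simp: Yd_mem)
          qed
        qed
        moreover have "\<forall>r1 c c'. (r1,c) \<in> ?Y \<and> (r1,c') \<in> ?Y \<and> c < c' \<longrightarrow> h (r1,c) < h (r1,c')"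
        proof (intro allI impI)
          fix r1 c c' assume a: "(r1,c) \<in> ?Y \<and> (r1,c') \<in> ?Y \<and> c < c'"
          show "h (r1,c) < h (r1,c')"
          proof (cases "(r1, c') = ?p")
            case True
            then have "(r1, c) \<noteq> ?p" using a by auto
            then have "(r1, c) \<in> Yd n A'" using gY a by auto
            then show ?thesis using below[of r1 c] hv True \<open>(r1, c) \<noteq> ?p\<close> by simp
          next
            case False
            have "(r1, c) \<noteq> ?p"
            proof
              assume "(r1, c) = ?p"
              then have "int c' \<le> L" "nat L < c'" using rowbound a by auto
              then show False by simp
            qed
            then show ?thesis using g gY a False hv unfolding SFt_def by auto
          qed
        qed
        moreover have "\<forall>r1 r2 c. (r1,c) \<in> ?Y \<and> (r2,c) \<in> ?Y \<and> r1 < r2 \<longrightarrow> h (r1,c) < h (r2,c)"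
        proof (intro allI impI)
          fix r1 r2 c assume a: "(r1,c) \<in> ?Y \<and> (r2,c) \<in> ?Y \<and> r1 < r2"
          show "h (r1,c) < h (r2,c)"
          proof (cases "(r2, c) = ?p")
            case True
            then have "(r1, c) \<noteq> ?p" using a by auto
            then have "(r1, c) \<in> Yd n A'" using gY a by auto
            then show ?thesis using below[of r1 c] hv True \<open>(r1, c) \<noteq> ?p\<close> a by simp
          next
            case False
            have "(r1, c) \<noteq> ?p"
            proof
              assume e: "(r1, c) = ?p"
              have "(Suc r, c) \<in> ?Y" using Lmono[of r2 c "Suc r"] a e by (auto simp: Yd_mem)
              then have "int c < L" using nextrow by blast
              moreover have "c = nat L" using e by simp
              ultimately show False using L1 by linarith
            qed
            then show ?thesis using g gY a False hv unfolding SFt_def by auto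
          qed
        qed
        moreover have "1 \<le> L \<and> h (r, nat L) = hi" using L1 hv by simp
        ultimately show "h \<in> U" unfolding U_def SFt_def by blast
      qed
    qed
    then have "card U = card (SFt n A' t')" by (rule bij_betw_same_card)
    then show ?thesis using cardsplit N_eq False by simp
  qed
qed


lemma detf_0: "detf 0 F = 1"
  unfolding detf_def by (rule det_dim_zero) simp

lemma SFt_empty_shape: assumes "Yd n A = {}" shows "SFt n A t = {\<lambda>_. 0}"
  using assms unfolding SFt_def by auto

lemma least_block:
  assumes st: "stepU n t" and n: "0 < n" and T: "t (n-1) = T"
  defines "i \<equiv> LEAST j. t j = T"
  shows "i < n" "\<And>j. i \<le> j \<Longrightarrow> j < n \<Longrightarrow> t j = T" "0 < i \<Longrightarrow> t (i - 1) = T - 1"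
proof -
  have ti: "t i = T" unfolding i_def by (rule LeastI[of _ "n-1"]) (use T in simp)
  have ile: "i \<le> n - 1" unfolding i_def by (rule Least_le) (use T in simp)
  then show "i < n" using n by simp
  show "\<And>j. i \<le> j \<Longrightarrow> j < n \<Longrightarrow> t j = T"
  proof -
    fix j assume "i \<le> j" "j < n"
    then have "t i \<le> t j" "t j \<le> t (n-1)" using stepU_mono[OF st] by auto
    then show "t j = T" using ti T by simp
  qed
  assume "0 < i"
  have "t (i-1) \<noteq> T"
  proof
    assume "t (i-1) = T"
    then have "i \<le> i - 1" unfolding i_def by (rule Least_le)
    then show False using \<open>0 < i\<close> by simp
  qed
  moreover have "Suc (i-1) < n" using \<open>0 < i\<close> ile n by simp
  then have "t (Suc (i-1)) = t (i-1) \<or> t (Suc (i-1)) = t (i-1) + 1"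
    using st unfolding stepU_def by blast
  ultimately show "t (i - 1) = T - 1" using ti \<open>0 < i\<close> by auto
qed

lemma strict_main:
  assumes "inc n A" "stepU n t"
  shows "Gd n A t = int (card (SFt n A t))"
  using assms
proof (induction "\<Sum>i<n. nat (t i)" arbitrary: A t rule: less_induct)
  case less
  note incA = less.prems(1) and st = less.prems(2)
  show ?case
  proof (cases "n = 0")
    case True
    then have "Yd n A = {}" by (auto simp: Yd_def)
    then show ?thesis using True by (simp add: Gd_def detf_0 SFt_empty_shape)
  next
    case False
    then have n: "0 < n" by simp
    define T where "T = t (n-1)"
    have tnn: "\<And>j. j < n \<Longrightarrow> 0 \<le> t j" using st unfolding stepU_def by auto
    show ?thesis
    proof (cases "T = 0")
      case True
      have t0: "\<And>j. j < n \<Longrightarrow> t j = 0"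
      proof -
        fix j assume j: "j < n"
        then have "t j \<le> t (n-1)" using stepU_mono[OF st, of j "n-1"] by simp
        then show "t j = 0" using tnn[OF j] True unfolding T_def by simp
      qed
      have An: "A (n-1) \<ge> int n" using inc_ge[OF incA, of "n-1"] n by simp
      show ?thesis
      proof (cases "A (n-1) = int n")
        case True
        have Aj: "\<And>j. j < n \<Longrightarrow> A j = int j + 1"
        proof -
          fix j assume j: "j < n"
          have "A (n-1) - A j \<ge> int (n - 1 - j)" by (rule inc_gap[OF incA]) (use j in auto)
          then show "A j = int j + 1" using inc_ge[OF incA j] True j by (simp add: of_nat_diff)
        qed
        have "Gd n A t = detf n (\<lambda>i j. if i = j then 1 else 0)"
          unfolding Gd_def by (rule detf_cong) (simp add: t0 Aj gbin_0_left)
        then have "Gd n A t = 1" by (simp add: detf_id)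
        moreover have "Yd n A = {}" using Aj by (auto simp: Yd_def of_nat_diff)
        ultimately show ?thesis by (simp add: SFt_empty_shape)
      next
        case False
        then have An': "A (n-1) > int n" using An by simp
        have "Gd n A t = 0" unfolding Gd_def
          by (rule detf_zero_row[of "n-1"]) (use n An' t0 in \<open>auto simp: gbin_0_left\<close>)
        moreover have "SFt n A t = {}"
        proof (rule ccontr)
          assume "SFt n A t \<noteq> {}"
          then obtain f where f: "f \<in> SFt n A t" by auto
          have "(1,1) \<in> Yd n A" using n An' by (auto simp: Yd_mem of_nat_diff)
          then have "f (1,1) \<in> {1 .. t (n - 1) + 1 - 1}" using f unfolding SFt_def by force
          then show False using t0[of "n-1"] n by simp
        qed
        ultimately show ?thesis by simp
      qed
    next
      case False
      then have T1: "1 \<le> T" using tnn[of "n-1"] n unfolding T_def by simp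
      define i where "i = (LEAST j. t j = T)"
      have i1: "i < n" unfolding i_def by (rule least_block(1)[OF st n T_def[symmetric]])
      have i2: "\<And>j. i \<le> j \<Longrightarrow> j < n \<Longrightarrow> t j = T" unfolding i_def by (rule least_block(2)[OF st n T_def[symmetric]])
      have i3: "0 < i \<Longrightarrow> t (i - 1) = T - 1" unfolding i_def by (rule least_block(3)[OF st n T_def[symmetric]])
      note i = i1 i2 i3
      define t' where "t' = t(i := T - 1)"
      define A' where "A' = A(i := A i - 1)"
      define Z where "Z = ((i = 0 \<and> A 0 = 1) \<or> (0 < i \<and> A (i-1) = A i - 1))"
      note S = strict_step[OF incA st i(1) T1 i(2) i(3) t'_def A'_def Z_def]
      have st': "stepU n t'"
        unfolding stepU_def
      proof (intro conjI allI impI)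
        fix j assume "j < n" then show "0 \<le> t' j" using tnn T1 unfolding t'_def by simp
      next
        fix j assume j: "Suc j < n"
        show "t' (Suc j) = t' j \<or> t' (Suc j) = t' j + 1"
        proof (cases "Suc j = i")
          case True then show ?thesis using i(3) unfolding t'_def by auto
        next
          case F: False
          show ?thesis
          proof (cases "j = i")
            case True then show ?thesis using i(2)[of "Suc j"] j unfolding t'_def by auto
          next
            case False then show ?thesis using F st j unfolding t'_def stepU_def by auto
          qed
        qed
      qed
      have lt: "(\<Sum>j<n. nat (t' j)) < (\<Sum>j<n. nat (t j))"
      proof (rule sum_strict_mono_ex1)
        show "\<forall>x\<in>{..<n}. nat (t' x) \<le> nat (t x)" using i(1) i(2)[of i] unfolding t'_def by auto
        show "\<exists>a\<in>{..<n}. nat (t' a) < nat (t a)"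
          using i(1) i(2)[of i] T1 unfolding t'_def by (intro bexI[of _ i]) auto
      qed simp
      have IH1: "Gd n A t' = int (card (SFt n A t'))" by (rule less.hyps[OF lt incA st'])
      show ?thesis
      proof (cases Z)
        case True
        then show ?thesis using S IH1 by simp
      next
        case False
        have incA': "inc n A'"
          unfolding inc_def
        proof (intro conjI allI impI)
          fix j assume j: "Suc j < n"
          have a: "A j < A (Suc j)" using incA j unfolding inc_def by simp
          show "A' j < A' (Suc j)"
          proof (cases "Suc j = i")
            case True then show ?thesis using False a unfolding Z_def A'_def by auto
          next
            case F: False
            show ?thesis
            proof (cases "j = i")
              case True then show ?thesis using a F unfolding A'_def by auto
            next
              case False then show ?thesis using a F unfolding A'_def by auto
            qed
          qed
        next
          assume "0 < n"
          show "1 \<le> A' 0" using False incA n unfolding Z_def A'_def inc_def by auto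
        qed
        have IH2: "Gd n A' t' = int (card (SFt n A' t'))" by (rule less.hyps[OF lt incA' st'])
        show ?thesis using S IH1 IH2 False by simp
      qed
    qed
  qed
qed


definition WFt :: "nat \<Rightarrow> (nat \<Rightarrow> int) \<Rightarrow> (nat \<Rightarrow> int) \<Rightarrow> ((nat \<times> nat) \<Rightarrow> int) set" where
  "WFt n A t = {f. (\<forall>x. x \<notin> Yd n A \<longrightarrow> f x = 0) \<and>
     (\<forall>x\<in>Yd n A. f x \<in> {0 .. t (n - fst x) - int (fst x)}) \<and>
     (\<forall>r c c'. (r,c) \<in> Yd n A \<and> (r,c') \<in> Yd n A \<and> c < c' \<longrightarrow> f (r,c) \<le> f (r,c')) \<and>
     (\<forall>r r' c. (r,c) \<in> Yd n A \<and> (r',c) \<in> Yd n A \<and> r < r' \<longrightarrow> f (r,c) \<le> f (r',c))}"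

lemma WFt_finite: "finite (WFt n A t)"
proof -
  let ?B = "\<Union>x\<in>Yd n A. {0 .. t (n - fst x) - int (fst x)}"
  have "WFt n A t \<subseteq> {f. (\<forall>x. x \<notin> Yd n A \<longrightarrow> f x = (0::int)) \<and> (\<forall>x\<in>Yd n A. f x \<in> ?B)}"
    unfolding WFt_def by blast
  moreover have "finite ?B" using Yd_finite by auto
  ultimately show ?thesis using finite_bounded_funs[OF Yd_finite] finite_subset by blast
qed

definition Hd :: "nat \<Rightarrow> (nat \<Rightarrow> int) \<Rightarrow> (nat \<Rightarrow> int) \<Rightarrow> int" where
  "Hd n A t = detf n (\<lambda>i j. gbin (t i + (A i - int (j+1)) - 1) (A i - int (j+1)))"

definition stepD :: "nat \<Rightarrow> (nat \<Rightarrow> int) \<Rightarrow> bool" where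
  "stepD n t \<longleftrightarrow> (\<forall>i<n. 0 \<le> t i) \<and> (\<forall>i. Suc i < n \<longrightarrow> t (Suc i) = t i \<or> t (Suc i) = t i - 1)"

lemma stepD_mono: assumes "stepD n t" "i \<le> j" "j < n" shows "t j \<le> t i"
  using assms(2,3)
proof (induction j)
  case 0 then show ?case by simp
next
  case (Suc j)
  show ?case
  proof (cases "i = Suc j")
    case True then show ?thesis by simp
  next
    case False
    then have "t j \<le> t i" using Suc by simp
    moreover have "t (Suc j) = t j \<or> t (Suc j) = t j - 1" using assms(1) Suc unfolding stepD_def by simp
    ultimately show ?thesis by auto
  qed
qed

lemma weak_step:
  fixes n i :: nat and A t :: "nat \<Rightarrow> int" and T :: int
  assumes incA: "inc n A" and st: "stepD n t" and i: "i < n" and T1: "1 \<le> T"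
    and ti: "\<And>j. j \<le> i \<Longrightarrow> t j = T"
    and tip: "Suc i < n \<Longrightarrow> t (Suc i) = T - 1"
    and t'_def: "t' = t(i := T - 1)" and A'_def: "A' = A(i := A i - 1)"
    and Z_def: "Z = ((i = 0 \<and> A 0 = 1) \<or> (0 < i \<and> A (i-1) = A i - 1))"
  shows "Hd n A t = Hd n A t' + Hd n A' t"
    and "Z \<Longrightarrow> Hd n A' t = 0"
    and "card (WFt n A t) = card (WFt n A t') + (if Z then 0 else card (WFt n A' t))"
proof -
  show "Hd n A t = Hd n A t' + Hd n A' t"
    unfolding Hd_def
  proof (rule detf_row_add[OF i])
    fix a j assume "a < n" "a \<noteq> i"
    then show "gbin (t' a + (A a - int (j + 1)) - 1) (A a - int (j + 1)) = gbin (t a + (A a - int (j + 1)) - 1) (A a - int (j + 1)) \<and>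
               gbin (t a + (A' a - int (j + 1)) - 1) (A' a - int (j + 1)) = gbin (t a + (A a - int (j + 1)) - 1) (A a - int (j + 1))"
      unfolding t'_def A'_def by simp
  next
    fix j
    have "gbin (T + (A i - int (j + 1)) - 2 + 1) (A i - int (j + 1)) = gbin (T + (A i - int (j + 1)) - 2) (A i - int (j + 1)) + gbin (T + (A i - int (j + 1)) - 2) (A i - int (j + 1) - 1)"
      by (rule gbin_pascal)
    then show "gbin (t i + (A i - int (j + 1)) - 1) (A i - int (j + 1)) =
      gbin (t' i + (A i - int (j + 1)) - 1) (A i - int (j + 1)) + gbin (t i + (A' i - int (j + 1)) - 1) (A' i - int (j + 1))"
      using ti[of i] unfolding t'_def A'_def by (simp add: algebra_simps)
  qed
next
  assume Z: Z
  show "Hd n A' t = 0"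
  proof (cases "i = 0")
    case True
    then have "A 0 = 1" using Z unfolding Z_def by simp
    show ?thesis unfolding Hd_def
      by (rule detf_zero_row[of 0]) (use i True \<open>A 0 = 1\<close> in \<open>auto simp: A'_def\<close>)
  next
    case False
    then have a: "A (i-1) = A i - 1" using Z unfolding Z_def by simp
    have "t (i-1) = T" "t i = T" using ti by auto
    then show ?thesis unfolding Hd_def
      by (intro detf_equal_rows[of "i-1" n i]) (use i False a in \<open>auto simp: A'_def\<close>)
  qed
next
  define r where "r = n - i"
  define L where "L = A i - int i - 1"
  define u where "u = T - int r"
  have r1: "1 \<le> r" "r \<le> n" "n - r = i" using i unfolding r_def by auto
  have rowr: "\<And>r''. r'' \<le> n \<Longrightarrow> n - r'' = i \<longleftrightarrow> r'' = r" using i unfolding r_def by auto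
  have tr: "t (n - r) - int r = u" using r1 ti[of i] i unfolding u_def by simp
  have t'r: "t' (n - r) - int r = u - 1" using r1 unfolding u_def t'_def by simp
  have t'o: "\<And>r''. r'' \<le> n \<Longrightarrow> r'' \<noteq> r \<Longrightarrow> t' (n - r'') = t (n - r'')"
    using rowr unfolding t'_def by simp
  let ?Y = "Yd n A"
  have Lmono: "\<And>r1 r2 c. (r2, c) \<in> ?Y \<Longrightarrow> 1 \<le> r1 \<Longrightarrow> r1 \<le> r2 \<Longrightarrow> 1 \<le> c \<Longrightarrow> (r1, c) \<in> ?Y"
  proof -
    fix r1 r2 c assume a: "(r2, c) \<in> ?Y" "1 \<le> r1" "r1 \<le> r2" "1 \<le> c"
    have "A (n - r2) - int (n - r2) \<le> A (n - r1) - int (n - r1)"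
      by (rule inc_Lmono[OF incA]) (use a in \<open>auto simp: Yd_mem\<close>)
    then show "(r1, c) \<in> ?Y" using a by (auto simp: Yd_mem)
  qed
  define U where "U = {f \<in> WFt n A t. 1 \<le> L \<and> f (r, nat L) = u}"
  define N where "N = {f \<in> WFt n A t. \<not> (1 \<le> L \<and> f (r, nat L) = u)}"
  have split: "WFt n A t = U \<union> N" "U \<inter> N = {}" unfolding U_def N_def by auto
  have fU: "finite U" "finite N" using WFt_finite unfolding U_def N_def by auto
  have cardsplit: "card (WFt n A t) = card U + card N"
    using card_Un_disjoint[OF fU split(2)] split(1) by simp
  have rc_in: "1 \<le> L \<Longrightarrow> (r, nat L) \<in> ?Y" using r1 unfolding L_def by (auto simp: Yd_mem)
  have rowbound: "\<And>c. (r, c) \<in> ?Y \<Longrightarrow> int c \<le> L" using r1 unfolding L_def by (auto simp: Yd_mem)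
  have N_eq: "N = WFt n A t'"
  proof
    show "N \<subseteq> WFt n A t'"
    proof
      fix f assume fN: "f \<in> N"
      then have f: "f \<in> WFt n A t" and nu: "\<not> (1 \<le> L \<and> f (r, nat L) = u)" unfolding N_def by auto
      have "\<forall>x\<in>?Y. f x \<in> {0 .. t' (n - fst x) - int (fst x)}"
      proof
        fix x assume x: "x \<in> ?Y"
        obtain r'' c where xe: "x = (r'', c)" by (cases x)
        have b: "f x \<in> {0 .. t (n - r'') - int r''}" using f x xe unfolding WFt_def by auto
        show "f x \<in> {0 .. t' (n - fst x) - int (fst x)}"
        proof (cases "r'' = r")
          case False
          then show ?thesis using b t'o[of r''] x xe by (auto simp: Yd_mem)
        next
          case True
          have Lc: "int c \<le> L" "1 \<le> c" using rowbound x xe True by (auto simp: Yd_mem)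
          have inL: "(r, nat L) \<in> ?Y" using rc_in Lc by simp
          have le: "f (r, nat L) \<le> u" using f inL tr unfolding WFt_def by force
          have "f (r, nat L) \<le> u - 1" using le nu Lc by auto
          moreover have "f (r, c) \<le> f (r, nat L)"
          proof (cases "int c = L")
            case True
            then have "c = nat L" by simp
            then show ?thesis by simp
          next
            case False
            then have "c < nat L" using Lc by simp
            then show "f (r, c) \<le> f (r, nat L)" using f x xe True inL unfolding WFt_def by blast
          qed
          ultimately show ?thesis using b True xe t'r by simp
        qed
      qed
      then show "f \<in> WFt n A t'" using f unfolding WFt_def by blast
    qed
  next
    show "WFt n A t' \<subseteq> N"
    proof
      fix f assume f: "f \<in> WFt n A t'"
      have "\<forall>x\<in>?Y. f x \<in> {0 .. t (n - fst x) - int (fst x)}"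
      proof
        fix x assume x: "x \<in> ?Y"
        obtain r'' c where xe: "x = (r'', c)" by (cases x)
        have b: "f x \<in> {0 .. t' (n - r'') - int r''}" using f x xe unfolding WFt_def by auto
        show "f x \<in> {0 .. t (n - fst x) - int (fst x)}"
          using b t'o[of r''] x xe t'r tr by (cases "r'' = r") (auto simp: Yd_mem)
      qed
      moreover have "\<not> (1 \<le> L \<and> f (r, nat L) = u)"
      proof
        assume a: "1 \<le> L \<and> f (r, nat L) = u"
        then have "f (r, nat L) \<le> u - 1" using f rc_in t'r unfolding WFt_def by force
        then show False using a by simp
      qed
      ultimately show "f \<in> N" using f unfolding N_def WFt_def by blast
    qed
  qed
  show "card (WFt n A t) = card (WFt n A t') + (if Z then 0 else card (WFt n A' t))"
  proof (cases Z)
    case True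
    have "U = {}"
    proof (rule ccontr)
      assume "U \<noteq> {}"
      then obtain f where f: "f \<in> WFt n A t" "1 \<le> L" "f (r, nat L) = u" unfolding U_def by auto
      show False
      proof (cases "i = 0")
        case True
        then show False using \<open>Z\<close> f(2) unfolding Z_def L_def by simp
      next
        case False
        then have a: "A (i-1) = A i - 1" using \<open>Z\<close> unfolding Z_def by simp
        have rr: "n - Suc r = i - 1" "Suc r \<le> n" using False i unfolding r_def by auto
        have in2: "(Suc r, nat L) \<in> ?Y" using rr a f(2) False unfolding L_def
          by (auto simp: Yd_mem of_nat_diff)
        have "f (r, nat L) \<le> f (Suc r, nat L)" using f(1) in2 rc_in[OF f(2)] unfolding WFt_def by blast
        moreover have "f (Suc r, nat L) \<le> t (n - Suc r) - int (Suc r)"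
          using f(1) in2 unfolding WFt_def by force
        moreover have "t (n - Suc r) = T" using rr ti by simp
        ultimately show False using f(3) unfolding u_def by simp
      qed
    qed
    then show ?thesis using cardsplit N_eq True by simp
  next
    case False
    have L1: "1 \<le> L"
    proof (cases "i = 0")
      case True
      then have "A 0 \<noteq> 1" using False unfolding Z_def by simp
      then show ?thesis using inc_ge[OF incA i] True unfolding L_def by simp
    next
      case F: False
      then have "A (i - 1) \<noteq> A i - 1" using False unfolding Z_def by simp
      moreover have "A (i-1) < A i" using incA i F unfolding inc_def
        by (metis Suc_pred' bot_nat_0.not_eq_extremum)
      moreover have "A (i-1) \<ge> int (i - 1) + 1" using inc_ge[OF incA] i by simp
      ultimately show ?thesis using F unfolding L_def by (simp add: of_nat_diff)
    qed
    have nextrow: "\<And>c. (Suc r, c) \<in> ?Y \<Longrightarrow> int c < L"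
    proof -
      fix c assume a: "(Suc r, c) \<in> ?Y"
      then have F: "0 < i" "n - Suc r = i - 1" using r1 unfolding r_def by (auto simp: Yd_mem)
      then have "A (i - 1) \<noteq> A i - 1" using False unfolding Z_def by simp
      moreover have "A (i-1) < A i" using incA i F unfolding inc_def
        by (metis Suc_pred')
      ultimately have "A (i-1) < A i - 1" by simp
      then show "int c < L" using a F unfolding L_def by (auto simp: Yd_mem of_nat_diff)
    qed
    have Y'eq: "Yd n A' = ?Y - {(r, nat L)}"
    proof (rule Set.set_eqI)
      fix x :: "nat \<times> nat"
      obtain r'' c where xe: "x = (r'', c)" by (cases x)
      show "x \<in> Yd n A' \<longleftrightarrow> x \<in> ?Y - {(r, nat L)}"
      proof (cases "r'' = r")
        case True
        then show ?thesis using xe r1 L1 unfolding A'_def L_def by (auto simp: Yd_mem)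
      next
        case False
        then have "r'' \<le> n \<Longrightarrow> n - r'' \<noteq> i" using rowr by simp
        then show ?thesis using xe False unfolding A'_def by (auto simp: Yd_mem)
      qed
    qed
    let ?p = "(r, nat L)"
    define res where "res = (\<lambda>f::nat\<times>nat\<Rightarrow>int. f(?p := 0))"
    define ext where "ext = (\<lambda>f::nat\<times>nat\<Rightarrow>int. f(?p := u))"
    have pin: "?p \<in> ?Y" using rc_in L1 by simp
    have "bij_betw res U (WFt n A' t)"
    proof (rule bij_betw_byWitness[where f'=ext])
      show "\<forall>f\<in>U. ext (res f) = f" unfolding U_def ext_def res_def by auto
      show "\<forall>g\<in>WFt n A' t. res (ext g) = g"
      proof
        fix g assume "g \<in> WFt n A' t"
        then have "g ?p = 0" unfolding WFt_def Y'eq by auto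
        then show "res (ext g) = g" unfolding res_def ext_def by auto
      qed
      show "res ` U \<subseteq> WFt n A' t"
      proof
        fix h assume "h \<in> res ` U"
        then obtain f where fU: "f \<in> U" and h: "h = res f" by auto
        have f: "f \<in> WFt n A t" "f ?p = u" using fU L1 unfolding U_def by auto
        have hv: "\<And>x. x \<in> Yd n A' \<Longrightarrow> h x = f x" using h Y'eq unfolding res_def by auto
        have "\<forall>x. x \<notin> Yd n A' \<longrightarrow> h x = 0"
          using f(1) h Y'eq unfolding res_def WFt_def by auto
        moreover have "\<forall>x\<in>Yd n A'. h x \<in> {0 .. t (n - fst x) - int (fst x)}"
          using f(1) hv Y'eq unfolding WFt_def by auto
        moreover have "\<forall>r c c'. (r,c) \<in> Yd n A' \<and> (r,c') \<in> Yd n A' \<and> c < c' \<longrightarrow> h (r,c) \<le> h (r,c')"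
          using f(1) hv Y'eq unfolding WFt_def by auto
        moreover have "\<forall>r r' c. (r,c) \<in> Yd n A' \<and> (r',c) \<in> Yd n A' \<and> r < r' \<longrightarrow> h (r,c) \<le> h (r',c)"
          using f(1) hv Y'eq unfolding WFt_def by auto
        ultimately show "h \<in> WFt n A' t" unfolding WFt_def by blast
      qed
      show "ext ` WFt n A' t \<subseteq> U"
      proof
        fix h assume "h \<in> ext ` WFt n A' t"
        then obtain g where g: "g \<in> WFt n A' t" and h: "h = ext g" by auto
        have gY: "\<And>x. x \<in> ?Y \<Longrightarrow> x \<noteq> ?p \<Longrightarrow> x \<in> Yd n A'" using Y'eq by auto
        have hv: "\<And>x. x \<noteq> ?p \<Longrightarrow> h x = g x" "h ?p = u" using h unfolding ext_def by auto
        have gb: "\<And>r'' c. (r'', c) \<in> Yd n A' \<Longrightarrow> g (r'', c) \<in> {0 .. t (n - r'') - int r''}"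
          using g unfolding WFt_def by force
        have gcol: "\<And>r1 r2 c. (r1, c) \<in> Yd n A' \<Longrightarrow> (r2, c) \<in> Yd n A' \<Longrightarrow> r1 < r2 \<Longrightarrow> g (r1, c) \<le> g (r2, c)"
          using g unfolding WFt_def by blast
        have above: "\<And>r1. 1 \<le> r1 \<Longrightarrow> r1 < r \<Longrightarrow> (r1, nat L) \<in> Yd n A' \<and> g (r1, nat L) \<le> u"
        proof -
          fix r1 assume a: "1 \<le> r1" "r1 < r"
          have rm: "(r - 1, nat L) \<in> ?Y" using Lmono[OF pin, of "r-1"] a L1 by simp
          then have rm': "(r - 1, nat L) \<in> Yd n A'" using gY a by auto
          have "n - (r - 1) = Suc i" "Suc i < n" using a r1 unfolding r_def by auto
          then have tb: "t (n - (r - 1)) = T - 1" using tip by simp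
          have gv: "g (r - 1, nat L) \<le> u" using gb[OF rm'] tb a unfolding u_def by (simp add: of_nat_diff)
          have r1in: "(r1, nat L) \<in> Yd n A'" using Lmono[OF pin, of r1] a L1 gY by auto
          show "(r1, nat L) \<in> Yd n A' \<and> g (r1, nat L) \<le> u"
          proof (cases "r1 = r - 1")
            case True then show ?thesis using gv rm' by simp
          next
            case False
            then have "g (r1, nat L) \<le> g (r - 1, nat L)" using gcol[OF r1in rm'] a by simp
            then show ?thesis using gv r1in by simp
          qed
        qed
        have u0: "0 \<le> u"
        proof (cases "r = 1")
          case True then show ?thesis using T1 unfolding u_def by simp
        next
          case False
          then have "(r - 1, nat L) \<in> Yd n A' \<and> g (r - 1, nat L) \<le> u" using above r1 by simp
          then show ?thesis using gb by force
        qed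
        have "\<forall>x. x \<notin> ?Y \<longrightarrow> h x = 0"
        proof (intro allI impI)
          fix x assume "x \<notin> ?Y"
          then have "x \<noteq> ?p" "x \<notin> Yd n A'" using pin Y'eq by auto
          moreover have "g x = 0" using g \<open>x \<notin> Yd n A'\<close> unfolding WFt_def by blast
          ultimately show "h x = 0" using hv(1) by simp
        qed
        moreover have "\<forall>x\<in>?Y. h x \<in> {0 .. t (n - fst x) - int (fst x)}"
        proof
          fix x assume x: "x \<in> ?Y"
          obtain r'' c where xe: "x = (r'', c)" by (cases x)
          show "h x \<in> {0 .. t (n - fst x) - int (fst x)}"
          proof (cases "x = ?p")
            case True then show ?thesis using hv(2) u0 tr by simp
          next
            case False
            have b: "g x \<in> {0 .. t (n - r'') - int r''}" using gb gY[OF x False] xe by simp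
            show ?thesis using b hv(1)[OF False] xe by simp
          qed
        qed
        moreover have "\<forall>r1 c c'. (r1,c) \<in> ?Y \<and> (r1,c') \<in> ?Y \<and> c < c' \<longrightarrow> h (r1,c) \<le> h (r1,c')"
        proof (intro allI impI)
          fix r1 c c' assume a: "(r1,c) \<in> ?Y \<and> (r1,c') \<in> ?Y \<and> c < c'"
          show "h (r1,c) \<le> h (r1,c')"
          proof (cases "(r1, c') = ?p")
            case True
            then have "(r1, c) \<noteq> ?p" using a by auto
            then have "(r1, c) \<in> Yd n A'" using gY a by auto
            then have "g (r1, c) \<le> u" using gb True tr by force
            then show ?thesis using hv True \<open>(r1, c) \<noteq> ?p\<close> by simp
          next
            case False
            have "(r1, c) \<noteq> ?p"
            proof
              assume "(r1, c) = ?p"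
              then have "int c' \<le> L" "nat L < c'" using rowbound a by auto
              then show False by simp
            qed
            then show ?thesis using g gY a False hv unfolding WFt_def by auto
          qed
        qed
        moreover have "\<forall>r1 r2 c. (r1,c) \<in> ?Y \<and> (r2,c) \<in> ?Y \<and> r1 < r2 \<longrightarrow> h (r1,c) \<le> h (r2,c)"
        proof (intro allI impI)
          fix r1 r2 c assume a: "(r1,c) \<in> ?Y \<and> (r2,c) \<in> ?Y \<and> r1 < r2"
          show "h (r1,c) \<le> h (r2,c)"
          proof (cases "(r2, c) = ?p")
            case True
            then have "(r1, c) \<noteq> ?p" using a by auto
            have "1 \<le> r1" using a by (auto simp: Yd_mem)
            then have "g (r1, c) \<le> u" using above[of r1] True a by auto
            then show ?thesis using hv True \<open>(r1, c) \<noteq> ?p\<close> by simp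
          next
            case False
            have "(r1, c) \<noteq> ?p"
            proof
              assume e: "(r1, c) = ?p"
              have "(Suc r, c) \<in> ?Y" using Lmono[of r2 c "Suc r"] a e by (auto simp: Yd_mem)
              then have "int c < L" using nextrow by blast
              moreover have "c = nat L" using e by simp
              ultimately show False using L1 by linarith
            qed
            then show ?thesis using g gY a False hv unfolding WFt_def by auto
          qed
        qed
        moreover have "1 \<le> L \<and> h (r, nat L) = u" using L1 hv by simp
        ultimately show "h \<in> U" unfolding U_def WFt_def by blast
      qed
    qed
    then have "card U = card (WFt n A' t)" by (rule bij_betw_same_card)
    then show ?thesis using cardsplit N_eq False by simp
  qed
qed


lemma WFt_empty_shape: assumes "Yd n A = {}" shows "WFt n A t = {\<lambda>_. 0}"
  using assms unfolding WFt_def by auto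

lemma hh0: "gbin (k - 1) k = (if k = 0 then 1 else 0)"
proof (cases "k < 0")
  case True then show ?thesis by simp
next
  case False
  then show ?thesis by (cases "k = 0") (auto intro: gbin_zero_big)
qed

lemma greatest_block:
  assumes st: "stepD n t" and n: "0 < n" and T: "t 0 = T"
  defines "i \<equiv> LEAST j. (n \<le> Suc j \<or> t (Suc j) \<noteq> T)"
  shows "i < n" "\<And>j. j \<le> i \<Longrightarrow> t j = T" "Suc i < n \<Longrightarrow> t (Suc i) = T - 1"
proof -
  have ex: "n \<le> Suc (n-1) \<or> t (Suc (n-1)) \<noteq> T" by arith
  have ile: "i \<le> n - 1" unfolding i_def by (rule Least_le) (rule ex)
  then show "i < n" using n by simp
  show "\<And>j. j \<le> i \<Longrightarrow> t j = T"
  proof -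
    fix j show "j \<le> i \<Longrightarrow> t j = T"
    proof (induction j)
      case 0 then show ?case using T by simp
    next
      case (Suc j)
      then have "j < i" by simp
      then have "\<not> (n \<le> Suc j \<or> t (Suc j) \<noteq> T)" unfolding i_def by (rule not_less_Least)
      then show ?case by simp
    qed
  qed
  then have ti: "t i = T" by simp
  assume si: "Suc i < n"
  have "n \<le> Suc i \<or> t (Suc i) \<noteq> T" unfolding i_def by (rule LeastI[of _ "n-1"]) (rule ex)
  then have "t (Suc i) \<noteq> T" using si by simp
  moreover have "t (Suc i) = t i \<or> t (Suc i) = t i - 1" using st si unfolding stepD_def by blast
  ultimately show "t (Suc i) = T - 1" using ti by auto
qed

lemma weak_main:
  assumes "inc n A" "stepD n t"
  shows "Hd n A t = int (card (WFt n A t))"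
  using assms
proof (induction "\<Sum>i<n. nat (t i) + nat (A i)" arbitrary: A t rule: less_induct)
  case less
  note incA = less.prems(1) and st = less.prems(2)
  show ?case
  proof (cases "n = 0")
    case True
    then have "Yd n A = {}" by (auto simp: Yd_def)
    then show ?thesis using True by (simp add: Hd_def detf_0 WFt_empty_shape)
  next
    case False
    then have n: "0 < n" by simp
    define T where "T = t 0"
    have tnn: "\<And>j. j < n \<Longrightarrow> 0 \<le> t j" using st unfolding stepD_def by auto
    show ?thesis
    proof (cases "T = 0")
      case True
      have t0: "\<And>j. j < n \<Longrightarrow> t j = 0"
      proof -
        fix j assume j: "j < n"
        then have "t j \<le> t 0" using stepD_mono[OF st, of 0 j] by simp
        then show "t j = 0" using tnn[OF j] True unfolding T_def by simp
      qed
      have An: "A (n-1) \<ge> int n" using inc_ge[OF incA, of "n-1"] n by simp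
      show ?thesis
      proof (cases "A (n-1) = int n")
        case True
        have Aj: "\<And>j. j < n \<Longrightarrow> A j = int j + 1"
        proof -
          fix j assume j: "j < n"
          have "A (n-1) - A j \<ge> int (n - 1 - j)" by (rule inc_gap[OF incA]) (use j in auto)
          then show "A j = int j + 1" using inc_ge[OF incA j] True j by (simp add: of_nat_diff)
        qed
        have "Hd n A t = detf n (\<lambda>i j. if i = j then 1 else 0)"
          unfolding Hd_def
        proof (rule detf_cong)
          fix a j assume "a < n" "j < n"
          then show "gbin (t a + (A a - int (j + 1)) - 1) (A a - int (j + 1)) = (if a = j then 1 else 0)"
            using hh0[of "A a - int (j+1)"] by (simp add: t0 Aj)
        qed
        then have "Hd n A t = 1" by (simp add: detf_id)
        moreover have "Yd n A = {}" using Aj by (auto simp: Yd_def of_nat_diff)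
        ultimately show ?thesis by (simp add: WFt_empty_shape)
      next
        case False
        then have An': "A (n-1) > int n" using An by simp
        have "Hd n A t = 0" unfolding Hd_def
        proof (rule detf_zero_row[of "n-1"])
          fix j assume "j < n"
          then show "gbin (t (n-1) + (A (n-1) - int (j + 1)) - 1) (A (n-1) - int (j + 1)) = 0"
            using hh0[of "A (n-1) - int (j+1)"] t0[of "n-1"] n An' by simp
        qed (use n in simp)
        moreover have "WFt n A t = {}"
        proof (rule ccontr)
          assume "WFt n A t \<noteq> {}"
          then obtain f where f: "f \<in> WFt n A t" by auto
          have "(1,1) \<in> Yd n A" using n An' by (auto simp: Yd_mem of_nat_diff)
          then have "f (1,1) \<in> {0 .. t (n - 1) - 1}" using f unfolding WFt_def by force
          then show False using t0[of "n-1"] n by simp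
        qed
        ultimately show ?thesis by simp
      qed
    next
      case False
      then have T1: "1 \<le> T" using tnn[of 0] n unfolding T_def by simp
      define i where "i = (LEAST j. (n \<le> Suc j \<or> t (Suc j) \<noteq> T))"
      have i1: "i < n" unfolding i_def by (rule greatest_block(1)[OF st n T_def[symmetric]])
      have i2: "\<And>j. j \<le> i \<Longrightarrow> t j = T" unfolding i_def by (rule greatest_block(2)[OF st n T_def[symmetric]])
      have i3: "Suc i < n \<Longrightarrow> t (Suc i) = T - 1" unfolding i_def by (rule greatest_block(3)[OF st n T_def[symmetric]])
      define t' where "t' = t(i := T - 1)"
      define A' where "A' = A(i := A i - 1)"
      define Z where "Z = ((i = 0 \<and> A 0 = 1) \<or> (0 < i \<and> A (i-1) = A i - 1))"
      note S = weak_step[OF incA st i1 T1 i2 i3 t'_def A'_def Z_def]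
      have st': "stepD n t'"
        unfolding stepD_def
      proof (intro conjI allI impI)
        fix j assume "j < n" then show "0 \<le> t' j" using tnn T1 unfolding t'_def by simp
      next
        fix j assume j: "Suc j < n"
        show "t' (Suc j) = t' j \<or> t' (Suc j) = t' j - 1"
        proof (cases "Suc j = i")
          case True then show ?thesis using i2[of j] unfolding t'_def by auto
        next
          case F: False
          show ?thesis
          proof (cases "j = i")
            case True then show ?thesis using i3 j unfolding t'_def by auto
          next
            case False then show ?thesis using F st j unfolding t'_def stepD_def by auto
          qed
        qed
      qed
      have Ai1: "A i \<ge> 1" using inc_ge[OF incA i1] by simp
      have lt1: "(\<Sum>j<n. nat (t' j) + nat (A j)) < (\<Sum>j<n. nat (t j) + nat (A j))"
      proof (rule sum_strict_mono_ex1)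
        show "\<forall>x\<in>{..<n}. nat (t' x) + nat (A x) \<le> nat (t x) + nat (A x)"
          using i2[of i] unfolding t'_def by auto
        show "\<exists>a\<in>{..<n}. nat (t' a) + nat (A a) < nat (t a) + nat (A a)"
          using i1 i2[of i] T1 unfolding t'_def by (intro bexI[of _ i]) auto
      qed simp
      have IH1: "Hd n A t' = int (card (WFt n A t'))" by (rule less.hyps[OF lt1 incA st'])
      show ?thesis
      proof (cases Z)
        case True
        then show ?thesis using S IH1 by simp
      next
        case False
        have incA': "inc n A'"
          unfolding inc_def
        proof (intro conjI allI impI)
          fix j assume j: "Suc j < n"
          have a: "A j < A (Suc j)" using incA j unfolding inc_def by simp
          show "A' j < A' (Suc j)"
          proof (cases "Suc j = i")
            case True then show ?thesis using False a unfolding Z_def A'_def by auto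
          next
            case F: False
            show ?thesis
            proof (cases "j = i")
              case True then show ?thesis using a F unfolding A'_def by auto
            next
              case False then show ?thesis using a F unfolding A'_def by auto
            qed
          qed
        next
          assume "0 < n"
          show "1 \<le> A' 0" using False incA n unfolding Z_def A'_def inc_def by auto
        qed
        have lt2: "(\<Sum>j<n. nat (t j) + nat (A' j)) < (\<Sum>j<n. nat (t j) + nat (A j))"
        proof (rule sum_strict_mono_ex1)
          show "\<forall>x\<in>{..<n}. nat (t x) + nat (A' x) \<le> nat (t x) + nat (A x)"
            unfolding A'_def by auto
          show "\<exists>a\<in>{..<n}. nat (t a) + nat (A' a) < nat (t a) + nat (A a)"
            using i1 Ai1 unfolding A'_def by (intro bexI[of _ i]) auto
        qed simp
        have IH2: "Hd n A' t = int (card (WFt n A' t))" by (rule less.hyps[OF lt2 incA' st])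
        show ?thesis using S IH1 IH2 False by simp
      qed
    qed
  qed
qed


context
  fixes n :: nat and M :: "(nat \<times> nat) set"
  assumes mt: "is_matching n M"
begin

lemma m_sub: "e \<in> M \<Longrightarrow> 1 \<le> fst e \<and> fst e < snd e \<and> snd e \<le> 2*n"
  using mt unfolding is_matching_def by auto

lemma m_fin: "finite M"
proof -
  have "M \<subseteq> {1..2*n} \<times> {1..2*n}"
  proof
    fix e assume "e \<in> M"
    then show "e \<in> {1..2*n} \<times> {1..2*n}" using m_sub[of e] by (cases e) auto
  qed
  then show ?thesis by (rule finite_subset) auto
qed

lemma m_card: "x \<in> {1..2*n} \<Longrightarrow> card {e\<in>M. fst e = x \<or> snd e = x} = 1"
  using mt unfolding is_matching_def by auto

lemma m_nc: assumes "(a,b) \<in> M" "(c,d) \<in> M" shows "\<not> (a < c \<and> c < b \<and> b < d)"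
proof -
  have H: "\<forall>(a,b)\<in>M. \<forall>(c,d)\<in>M. \<not> (a < c \<and> c < b \<and> b < d)"
    using mt unfolding is_matching_def by (elim conjE)
  have "\<forall>(c,d)\<in>M. \<not> (a < c \<and> c < b \<and> b < d)" using bspec[OF H assms(1)] by simp
  from bspec[OF this assms(2)] show ?thesis by simp
qed

lemma m_uniq:
  assumes "e \<in> M" "e' \<in> M" "z = fst e \<or> z = snd e" "z = fst e' \<or> z = snd e'"
  shows "e = e'"
proof -
  have z: "z \<in> {1..2*n}" using m_sub[OF assms(1)] assms(3) by auto
  obtain w where w: "{e\<in>M. fst e = z \<or> snd e = z} = {w}" using m_card[OF z] by (rule card_1_singletonE)
  have "e \<in> {e\<in>M. fst e = z \<or> snd e = z}" using assms(1,3) by auto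
  then have 1: "e = w" using w by simp
  have "e' \<in> {e\<in>M. fst e = z \<or> snd e = z}" using assms(2,4) by auto
  then have 2: "e' = w" using w by simp
  show ?thesis using 1 2 by simp
qed

lemma m_cover: "x \<in> {1..2*n} \<Longrightarrow> x \<in> fst ` M \<or> x \<in> snd ` M"
proof -
  assume x: "x \<in> {1..2*n}"
  obtain w where w: "{e\<in>M. fst e = x \<or> snd e = x} = {w}" using m_card[OF x] by (rule card_1_singletonE)
  then have wM: "w \<in> M" and wx: "fst w = x \<or> snd w = x" by auto
  show ?thesis
  proof (cases "fst w = x")
    case True
    then have "x \<in> fst ` M" using wM by (intro image_eqI[of _ fst w]) auto
    then show ?thesis by simp
  next
    case False
    then have "snd w = x" using wx by simp
    then have "x \<in> snd ` M" using wM by (intro image_eqI[of _ snd w]) auto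
    then show ?thesis by simp
  qed
qed

lemma m_disj: "fst ` M \<inter> snd ` M = {}"
proof (rule ccontr)
  assume "fst ` M \<inter> snd ` M \<noteq> {}"
  then obtain x where "x \<in> fst ` M" "x \<in> snd ` M" by blast
  then obtain e e' where e: "e \<in> M" "e' \<in> M" "fst e = snd e'" by blast
  then have "e = e'" using m_uniq[of e e' "fst e"] by simp
  then show False using e m_sub[OF e(1)] by simp
qed

lemma m_inj_fst: "inj_on fst M"
proof (rule inj_onI)
  fix e e' assume "e \<in> M" "e' \<in> M" "fst e = fst e'"
  then show "e = e'" using m_uniq[of e e' "fst e"] by simp
qed

lemma m_inj_snd: "inj_on snd M"
proof (rule inj_onI)
  fix e e' assume "e \<in> M" "e' \<in> M" "snd e = snd e'"
  then show "e = e'" using m_uniq[of e e' "snd e"] by simp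
qed

lemma m_cardO: "card (fst ` M) = n"
proof -
  have un: "fst ` M \<union> snd ` M = {1..2*n}"
  proof
    show "fst ` M \<union> snd ` M \<subseteq> {1..2*n}"
    proof
      fix x assume "x \<in> fst ` M \<union> snd ` M"
      then obtain e where "e \<in> M" "x = fst e \<or> x = snd e" by blast
      then show "x \<in> {1..2*n}" using m_sub[of e] by auto
    qed
    show "{1..2*n} \<subseteq> fst ` M \<union> snd ` M" using m_cover by blast
  qed
  have fin: "finite (fst ` M)" "finite (snd ` M)" using m_fin by auto
  have "card (fst ` M) + card (snd ` M) = 2 * n"
    using card_Un_disjoint[OF fin m_disj] un by simp
  moreover have "card (fst ` M) = card M" "card (snd ` M) = card M"
    using card_image[OF m_inj_fst] card_image[OF m_inj_snd] by auto
  ultimately show ?thesis by simp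
qed

definition "mxs = sorted_list_of_set (fst ` M)"

lemma xs_len: "length mxs = n" unfolding mxs_def using m_cardO m_fin by simp
lemma xs_set: "set mxs = fst ` M" unfolding mxs_def using m_fin by simp
lemma xs_sorted: "sorted_wrt (<) mxs" unfolding mxs_def by (rule strict_sorted_list_of_set)
lemma xs_distinct: "distinct mxs" using xs_sorted by (simp add: strict_sorted_iff)

lemma xs_lt: "i < j \<Longrightarrow> j < n \<Longrightarrow> mxs ! i < mxs ! j"
  using sorted_wrt_nth_less[OF xs_sorted] xs_len by simp

lemma xs_in: "k < n \<Longrightarrow> mxs ! k \<in> fst ` M"
  using nth_mem[of k mxs] xs_set xs_len by simp

lemma xs_ge1: "k < n \<Longrightarrow> 1 \<le> mxs ! k"
  using xs_in m_sub by force

lemma xs_inc: "inc n (\<lambda>i. int (mxs ! i))"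
  unfolding inc_def using xs_lt xs_ge1 by auto

lemma xs_index: assumes k: "k < n" shows "card {y \<in> fst ` M. y < mxs ! k} = k"
proof -
  have "{y \<in> fst ` M. y < mxs ! k} = (\<lambda>j. mxs ! j) ` {..<k}"
  proof
    show "(\<lambda>j. mxs ! j) ` {..<k} \<subseteq> {y \<in> fst ` M. y < mxs ! k}"
    proof
      fix y assume "y \<in> (\<lambda>j. mxs ! j) ` {..<k}"
      then obtain j where j: "j < k" "y = mxs ! j" by blast
      then show "y \<in> {y \<in> fst ` M. y < mxs ! k}" using xs_lt[of j k] xs_in[of j] k by simp
    qed
    show "{y \<in> fst ` M. y < mxs ! k} \<subseteq> (\<lambda>j. mxs ! j) ` {..<k}"
    proof
      fix y assume y: "y \<in> {y \<in> fst ` M. y < mxs ! k}"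
      then have "y \<in> set mxs" using xs_set by simp
      then obtain j where j0: "j < length mxs" "mxs ! j = y" unfolding in_set_conv_nth by blast
      then have j: "j < n" "mxs ! j = y" using xs_len by auto
      have "j < k"
      proof (rule ccontr)
        assume "\<not> j < k"
        then have "k \<le> j" by simp
        then have "mxs ! k \<le> mxs ! j"
        proof (cases "j = k")
          case False then show ?thesis using xs_lt[of k j] j \<open>k \<le> j\<close> by simp
        qed simp
        then show False using y j by simp
      qed
      then show "y \<in> (\<lambda>j. mxs ! j) ` {..<k}" using j by (intro image_eqI[of _ _ j]) auto
    qed
  qed
  moreover have "inj_on (\<lambda>j. mxs ! j) {..<k}"
  proof (rule inj_onI)
    fix a b assume "a \<in> {..<k}" "b \<in> {..<k}" "mxs ! a = mxs ! b"
    then show "a = b" using nth_eq_iff_index_eq[OF xs_distinct, of a b] xs_len k by simp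
  qed
  ultimately show ?thesis using card_image by fastforce
qed

lemma xs_bound: assumes k: "k < n" shows "mxs ! k \<le> 2 * k + 1"
proof -
  define z where "z = mxs ! k"
  obtain e where e: "e \<in> M" "z = fst e" using xs_in[OF k] unfolding z_def by blast
  have z2: "z \<le> 2 * n" using m_sub[OF e(1)] e(2) by simp
  have sub: "{1..<z} \<subseteq> {y \<in> fst ` M. y < z} \<union> {y \<in> snd ` M. y < z}"
  proof
    fix y assume y: "y \<in> {1..<z}"
    then have "y \<in> {1..2*n}" using z2 by simp
    then have "y \<in> fst ` M \<or> y \<in> snd ` M" by (rule m_cover)
    then show "y \<in> {y \<in> fst ` M. y < z} \<union> {y \<in> snd ` M. y < z}" using y by auto
  qed
  have "{y \<in> snd ` M. y < z} = snd ` {e\<in>M. snd e < z}" by auto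
  moreover have "card (snd ` {e\<in>M. snd e < z}) \<le> card {e\<in>M. snd e < z}"
    by (rule card_image_le) (simp add: m_fin)
  ultimately have "card {y \<in> snd ` M. y < z} \<le> card {e\<in>M. snd e < z}" by simp
  also have "\<dots> \<le> card {e\<in>M. fst e < z}"
  proof (rule card_mono)
    show "finite {e\<in>M. fst e < z}" using m_fin by simp
    show "{e\<in>M. snd e < z} \<subseteq> {e\<in>M. fst e < z}"
    proof
      fix e assume "e \<in> {e\<in>M. snd e < z}"
      then show "e \<in> {e\<in>M. fst e < z}" using m_sub[of e] by auto
    qed
  qed
  also have "\<dots> = card (fst ` {e\<in>M. fst e < z})"
    by (rule card_image[symmetric]) (rule inj_on_subset[OF m_inj_fst], auto)
  also have "fst ` {e\<in>M. fst e < z} = {y \<in> fst ` M. y < z}" by auto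
  finally have c: "card {y \<in> snd ` M. y < z} \<le> k" using xs_index[OF k] unfolding z_def by simp
  have "card {1..<z} \<le> card ({y \<in> fst ` M. y < z} \<union> {y \<in> snd ` M. y < z})"
    by (rule card_mono) (use m_fin sub in auto)
  also have "\<dots> \<le> card {y \<in> fst ` M. y < z} + card {y \<in> snd ` M. y < z}" by (rule card_Un_le)
  finally have "card {1..<z} \<le> card {y \<in> fst ` M. y < z} + card {y \<in> snd ` M. y < z}" .
  moreover have "card {y \<in> fst ` M. y < z} = k" using xs_index[OF k] unfolding z_def .
  moreover have "card {1..<z} = z - 1" by simp
  ultimately have "z - 1 \<le> 2 * k" using c by linarith
  then show ?thesis unfolding z_def by simp
qed

end


context
  fixes n :: nat and M :: "(nat \<times> nat) set"
  assumes mt: "is_matching n M"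
begin

lemma interior:
  assumes xy: "(x,y) \<in> M"
  shows "{e\<in>M. x < fst e \<and> fst e < y} = {e\<in>M. x < snd e \<and> snd e < y}"
proof (rule Set.set_eqI)
  fix e :: "nat \<times> nat"
  obtain u v where e: "e = (u, v)" by (cases e)
  show "e \<in> {e\<in>M. x < fst e \<and> fst e < y} \<longleftrightarrow> e \<in> {e\<in>M. x < snd e \<and> snd e < y}"
  proof
    assume a: "e \<in> {e\<in>M. x < fst e \<and> fst e < y}"
    then have uv: "(u,v) \<in> M" "x < u" "u < y" using e by auto
    have "u < v" using m_sub[OF mt uv(1)] by simp
    have "v \<noteq> y"
    proof
      assume "v = y"
      then have "(u,v) = (x,y)" using m_uniq[OF mt uv(1) xy, of y] by simp
      then show False using uv by simp
    qed
    moreover have "\<not> y < v" using m_nc[OF mt xy uv(1)] uv by auto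
    ultimately show "e \<in> {e\<in>M. x < snd e \<and> snd e < y}" using uv \<open>u < v\<close> e by auto
  next
    assume a: "e \<in> {e\<in>M. x < snd e \<and> snd e < y}"
    then have uv: "(u,v) \<in> M" "x < v" "v < y" using e by auto
    have "u < v" using m_sub[OF mt uv(1)] by simp
    have "u \<noteq> x"
    proof
      assume "u = x"
      then have "(u,v) = (x,y)" using m_uniq[OF mt uv(1) xy, of x] by simp
      then show False using uv by simp
    qed
    moreover have "\<not> u < x" using m_nc[OF mt uv(1) xy] uv by auto
    ultimately show "e \<in> {e\<in>M. x < fst e \<and> fst e < y}" using uv e \<open>u < v\<close> by auto
  qed
qed

lemma interior_count:
  assumes xy: "(x,y) \<in> M"
  shows "y - x - 1 = 2 * card (fst ` M \<inter> {x<..<y})"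
proof -
  define E where "E = {e\<in>M. x < fst e \<and> fst e < y}"
  have fE: "finite E" using m_fin[OF mt] unfolding E_def by simp
  have O: "fst ` M \<inter> {x<..<y} = fst ` E" unfolding E_def by auto
  have C: "snd ` M \<inter> {x<..<y} = snd ` E" unfolding interior[OF xy] E_def by auto
  have c1: "card (fst ` E) = card E"
    by (rule card_image) (rule inj_on_subset[OF m_inj_fst[OF mt]], auto simp: E_def)
  have c2: "card (snd ` E) = card E"
    by (rule card_image) (rule inj_on_subset[OF m_inj_snd[OF mt]], auto simp: E_def)
  have xy2: "1 \<le> x" "y \<le> 2*n" using m_sub[OF mt xy] by auto
  have un: "{x<..<y} = (fst ` M \<inter> {x<..<y}) \<union> (snd ` M \<inter> {x<..<y})"
  proof
    show "{x<..<y} \<subseteq> (fst ` M \<inter> {x<..<y}) \<union> (snd ` M \<inter> {x<..<y})"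
    proof
      fix w assume w: "w \<in> {x<..<y}"
      then have "w \<in> {1..2*n}" using xy2 by simp
      then have "w \<in> fst ` M \<or> w \<in> snd ` M" by (rule m_cover[OF mt])
      then show "w \<in> (fst ` M \<inter> {x<..<y}) \<union> (snd ` M \<inter> {x<..<y})" using w by blast
    qed
  qed blast
  have dj: "(fst ` M \<inter> {x<..<y}) \<inter> (snd ` M \<inter> {x<..<y}) = {}" using m_disj[OF mt] by blast
  have "card {x<..<y} = card (fst ` M \<inter> {x<..<y}) + card (snd ` M \<inter> {x<..<y})"
    by (subst un, rule card_Un_disjoint) (use dj in auto)
  then show ?thesis unfolding O C c1 c2 by simp
qed

lemma xs_ge: "k < n \<Longrightarrow> int (mxs M ! k) \<ge> int k + 1"
  using inc_ge[OF xs_inc[OF mt]] by simp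

lemma outer_arcs:
  assumes s: "1 \<le> s" "s < n"
    and H: "\<And>k. s \<le> k \<Longrightarrow> k < n \<Longrightarrow> mxs M ! k \<le> 2 * k + 1 - s"
  shows "\<And>x. 1 \<le> x \<Longrightarrow> x \<le> Suc s \<Longrightarrow> x \<in> fst ` M"
    and "\<And>e. e \<in> M \<Longrightarrow> fst e \<le> s \<Longrightarrow> snd e = 2*n + 1 - fst e"
proof -
  let ?O = "fst ` M"
  have xsk: "\<And>k. k \<le> s \<Longrightarrow> mxs M ! k = Suc k"
  proof -
    fix k assume k: "k \<le> s"
    have a: "mxs M ! s \<le> s + 1" using H[of s] s by simp
    have "int (mxs M ! s) - int (mxs M ! k) \<ge> int (s - k)"
      using inc_gap[OF xs_inc[OF mt] k] s by simp
    then show "mxs M ! k = Suc k" using a xs_ge[of k] k s by simp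
  qed
  show opn: "\<And>x. 1 \<le> x \<Longrightarrow> x \<le> Suc s \<Longrightarrow> x \<in> ?O"
  proof -
    fix x assume "1 \<le> x" "x \<le> Suc s"
    then have "mxs M ! (x - 1) = x" "x - 1 < n" using xsk[of "x-1"] s by auto
    then show "x \<in> ?O" using xs_in[OF mt] by metis
  qed
  fix e assume eM: "e \<in> M" and es: "fst e \<le> s"
  obtain x y where e: "e = (x, y)" by (cases e)
  have xy: "(x,y) \<in> M" "x \<le> s" using eM es e by auto
  have x1: "1 \<le> x" "x < y" using m_sub[OF mt xy(1)] by auto
  have yO: "y \<notin> ?O" using m_disj[OF mt] xy(1) by force
  have ys: "Suc s < y"
  proof (rule ccontr)
    assume "\<not> Suc s < y"
    then have "y \<in> ?O" using opn[of y] x1 by simp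
    then show False using yO by simp
  qed
  define q where "q = card (?O \<inter> {x<..<y})"
  have yq: "y = x + 2 * q + 1" using interior_count[OF xy(1)] x1 unfolding q_def by simp
  have finO: "finite ?O" using m_fin[OF mt] by simp
  have Oy: "{w \<in> ?O. w < y} = {1..x} \<union> (?O \<inter> {x<..<y})"
  proof
    show "{w \<in> ?O. w < y} \<subseteq> {1..x} \<union> (?O \<inter> {x<..<y})"
    proof
      fix w assume w: "w \<in> {w \<in> ?O. w < y}"
      then have "1 \<le> w" using m_sub[OF mt] by force
      then show "w \<in> {1..x} \<union> (?O \<inter> {x<..<y})" using w by auto
    qed
    show "{1..x} \<union> (?O \<inter> {x<..<y}) \<subseteq> {w \<in> ?O. w < y}"
      using opn xy(2) x1 by auto
  qed
  have cOy: "card {w \<in> ?O. w < y} = x + q"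
    unfolding Oy q_def by (subst card_Un_disjoint) (use finO in auto)
  have "card {w \<in> ?O. w < y} \<le> card ?O" by (rule card_mono[OF finO]) auto
  then have le: "x + q \<le> n" using cOy m_cardO[OF mt] by simp
  have "{Suc x..Suc s} \<subseteq> ?O \<inter> {x<..<y}" using opn ys by auto
  then have "card {Suc x..Suc s} \<le> q" unfolding q_def by (intro card_mono) (use finO in auto)
  then have qs: "Suc s - x \<le> q" by simp
  have "x + q = n"
  proof (rule ccontr)
    assume "x + q \<noteq> n"
    then have K: "x + q < n" using le by simp
    define z where "z = mxs M ! (x + q)"
    have zi: "card {w \<in> ?O. w < z} = x + q" using xs_index[OF mt K] unfolding z_def .
    have zO: "z \<in> ?O" using xs_in[OF mt K] unfolding z_def .
    have "y < z"
    proof (rule ccontr)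
      assume "\<not> y < z"
      then have "z < y" using zO yO by (cases "z = y") auto
      then have "{w \<in> ?O. w < z} \<subseteq> {w \<in> ?O. w < y} - {z}" by auto
      then have "card {w \<in> ?O. w < z} \<le> card ({w \<in> ?O. w < y} - {z})"
        by (intro card_mono) (use finO in auto)
      also have "\<dots> = card {w \<in> ?O. w < y} - 1" using zO \<open>z < y\<close> finO by simp
      finally show False using zi cOy K x1 by simp
    qed
    moreover have "z \<le> 2 * (x + q) + 1 - s" using H[of "x + q"] K qs unfolding z_def by simp
    ultimately show False using yq xy(2) by simp
  qed
  then show "snd e = 2 * n + 1 - fst e" using yq e x1 by simp
qed

end


context
  fixes n :: nat and M :: "(nat \<times> nat) set"
  assumes mt: "is_matching n M"
begin

lemma surround_ex:
  assumes s: "1 \<le> s" "s < n"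
    and H: "\<And>k. s \<le> k \<Longrightarrow> k < n \<Longrightarrow> mxs M ! k \<le> 2 * k + 1 - s"
  shows "\<exists>m \<rho>. is_matching m \<rho> \<and> M = surround s m \<rho>"
proof -
  have oa1: "\<And>x. 1 \<le> x \<Longrightarrow> x \<le> Suc s \<Longrightarrow> x \<in> fst ` M"
  proof -
    fix x assume a: "1 \<le> x" "x \<le> Suc s"
    show "x \<in> fst ` M" by (rule outer_arcs(1)[OF mt s(1) s(2) _ a]) (rule H; assumption)
  qed
  have oa2: "\<And>e. e \<in> M \<Longrightarrow> fst e \<le> s \<Longrightarrow> snd e = 2*n + 1 - fst e"
  proof -
    fix e assume a: "e \<in> M" "fst e \<le> s"
    show "snd e = 2*n + 1 - fst e" by (rule outer_arcs(2)[OF mt s(1) s(2) _ a]) (rule H; assumption)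
  qed
  have f1: "\<And>e. e \<in> M \<Longrightarrow> s < fst e \<Longrightarrow> snd e \<le> 2*n - s"
  proof (rule ccontr)
    fix e assume e: "e \<in> M" "s < fst e" "\<not> snd e \<le> 2*n - s"
    define x where "x = 2*n + 1 - snd e"
    have se: "snd e \<le> 2*n" using m_sub[OF mt e(1)] by simp
    then have x: "1 \<le> x" "x \<le> s" using e(3) unfolding x_def by auto
    then obtain e' where e': "e' \<in> M" "fst e' = x" using oa1[of x] by force
    then have "snd e' = 2*n + 1 - x" using oa2[of e'] x by simp
    then have "snd e' = snd e" using se unfolding x_def by simp
    then have "e = e'" using m_uniq[OF mt e(1) e'(1), of "snd e"] by simp
    then show False using e' x e(2) by simp
  qed
  define sh where "sh = (\<lambda>(u::nat,v::nat). (u - s, v - s))"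
  define \<rho> where "\<rho> = sh ` {e\<in>M. s < fst e}"
  define m where "m = n - s"
  have m2: "2*m + 2*s = 2*n" using s unfolding m_def by simp
  have memr: "\<And>a b. (a,b) \<in> \<rho> \<longleftrightarrow> (a+s, b+s) \<in> M \<and> 0 < a"
  proof
    fix a b assume "(a,b) \<in> \<rho>"
    then obtain u v where uv: "(u,v) \<in> M" "s < u" "(a,b) = (u - s, v - s)"
      unfolding \<rho>_def sh_def by auto
    have "u < v" using m_sub[OF mt uv(1)] by simp
    then show "(a+s, b+s) \<in> M \<and> 0 < a" using uv by auto
  next
    fix a b assume a: "(a+s, b+s) \<in> M \<and> 0 < a"
    then have "(a+s, b+s) \<in> {e\<in>M. s < fst e}" by simp
    moreover have "sh (a+s, b+s) = (a,b)" unfolding sh_def by simp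
    ultimately show "(a,b) \<in> \<rho>" unfolding \<rho>_def by (metis image_eqI)
  qed
  have eq: "M = surround s m \<rho>"
  proof
    show "M \<subseteq> surround s m \<rho>"
    proof
      fix e assume e: "e \<in> M"
      obtain u v where uv: "e = (u,v)" by (cases e)
      show "e \<in> surround s m \<rho>"
      proof (cases "u \<le> s")
        case True
        then have "v = 2*n + 1 - u" using oa2[OF e] uv by simp
        moreover have "1 \<le> u" using m_sub[OF mt e] uv by simp
        ultimately show ?thesis using True uv m2 unfolding surround_def by auto
      next
        case False
        have "u < v" using m_sub[OF mt e] uv by simp
        then have "(u - s, v - s) \<in> \<rho>" using memr[of "u-s" "v-s"] False e uv by simp
        moreover have "e = (s + (u - s), s + (v - s))" using False uv \<open>u < v\<close> by simp
        ultimately show ?thesis unfolding surround_def by blast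
      qed
    qed
    show "surround s m \<rho> \<subseteq> M"
    proof
      fix e assume "e \<in> surround s m \<rho>"
      then consider (o) i where "e = (i, 2*m + 2*s + 1 - i)" "1 \<le> i" "i \<le> s"
        | (r) i j where "e = (s + i, s + j)" "(i,j) \<in> \<rho>"
        unfolding surround_def by blast
      then show "e \<in> M"
      proof cases
        case o
        then obtain e' where e': "e' \<in> M" "fst e' = i" using oa1[of i] by force
        then have "snd e' = 2*n + 1 - i" using oa2[of e'] o by simp
        then have "e' = e" using e' o m2 by (cases e') simp
        then show ?thesis using e' by simp
      next
        case r
        then show ?thesis using memr[of i j] by (simp add: add.commute)
      qed
    qed
  qed
  have im: "is_matching m \<rho>"
    unfolding is_matching_def
  proof (intro conjI)
    show "\<rho> \<subseteq> {(i,j). 1 \<le> i \<and> i < j \<and> j \<le> 2*m}"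
    proof
      fix e assume e: "e \<in> \<rho>"
      obtain a b where ab: "e = (a,b)" by (cases e)
      have M1: "(a+s, b+s) \<in> M" "0 < a" using memr e ab by auto
      have "a + s < b + s" "b + s \<le> 2*n - s"
        using m_sub[OF mt M1(1)] f1[OF M1(1)] M1(2) by auto
      then show "e \<in> {(i,j). 1 \<le> i \<and> i < j \<and> j \<le> 2*m}" using ab M1(2) m2 by auto
    qed
    show "\<forall>x\<in>{1..2*m}. card {e\<in>\<rho>. fst e = x \<or> snd e = x} = 1"
    proof
      fix x assume x: "x \<in> {1..2*m}"
      define S where "S = {e\<in>M. fst e = x + s \<or> snd e = x + s}"
      have Sfst: "\<And>e. e \<in> S \<Longrightarrow> s < fst e"
      proof (rule ccontr)
        fix e assume e: "e \<in> S" "\<not> s < fst e"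
        then have "snd e = 2*n + 1 - fst e" using oa2[of e] unfolding S_def by simp
        moreover have "1 \<le> fst e" using m_sub[OF mt, of e] e unfolding S_def by simp
        ultimately show False using e x m2 unfolding S_def by auto
      qed
      have "{e\<in>\<rho>. fst e = x \<or> snd e = x} = sh ` S"
      proof
        show "{e\<in>\<rho>. fst e = x \<or> snd e = x} \<subseteq> sh ` S"
        proof
          fix e assume e: "e \<in> {e\<in>\<rho>. fst e = x \<or> snd e = x}"
          obtain a b where ab: "e = (a,b)" by (cases e)
          have M1: "(a+s, b+s) \<in> M" using memr e ab by auto
          then have "(a+s, b+s) \<in> S" using e ab unfolding S_def by auto
          moreover have "sh (a+s, b+s) = e" using ab unfolding sh_def by simp
          ultimately show "e \<in> sh ` S" by (metis image_eqI)
        qed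
        show "sh ` S \<subseteq> {e\<in>\<rho>. fst e = x \<or> snd e = x}"
        proof
          fix e assume "e \<in> sh ` S"
          then obtain u v where uv: "(u,v) \<in> S" "e = sh (u,v)" by auto
          have us: "s < u" using Sfst[OF uv(1)] by simp
          have "(u,v) \<in> M" using uv unfolding S_def by simp
          then have "e \<in> \<rho>" using uv us unfolding \<rho>_def by auto
          moreover have "fst e = x \<or> snd e = x" using uv us unfolding S_def sh_def by auto
          ultimately show "e \<in> {e\<in>\<rho>. fst e = x \<or> snd e = x}" by simp
        qed
      qed
      moreover have "inj_on sh S"
      proof (rule inj_onI)
        fix e1 e2 assume a: "e1 \<in> S" "e2 \<in> S" "sh e1 = sh e2"
        have "s < fst e1" "s < fst e2" using Sfst a by auto
        moreover have "fst e1 < snd e1" "fst e2 < snd e2" using m_sub[OF mt] a unfolding S_def by auto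
        ultimately show "e1 = e2" using a(3) unfolding sh_def
          by (cases e1, cases e2) auto
      qed
      moreover have "card S = 1" unfolding S_def by (rule m_card[OF mt]) (use x m2 in auto)
      ultimately show "card {e\<in>\<rho>. fst e = x \<or> snd e = x} = 1" by (simp add: card_image)
    qed
    show "\<forall>(a,b)\<in>\<rho>. \<forall>(c,d)\<in>\<rho>. \<not> (a < c \<and> c < b \<and> b < d)"
    proof (clarify)
      fix a b c d assume e: "(a,b) \<in> \<rho>" "(c,d) \<in> \<rho>" "a < c" "c < b" "b < d"
      have "(a+s, b+s) \<in> M" "(c+s, d+s) \<in> M" using memr e by auto
      then have "\<not> (a+s < c+s \<and> c+s < b+s \<and> b+s < d+s)" by (rule m_nc[OF mt])
      then show False using e by simp
    qed
  qed
  show ?thesis using im eq by blast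
qed

end


lemma Dpi_Gd: assumes mt: "is_matching n M" shows "Dpi n M p = Gd n (\<lambda>i. int (mxs M ! i)) (\<lambda>i. p + int i)"
  unfolding Dpi_def Gd_def detf_def opener_def mxs_def[OF mt] by simp

lemma young_Yd: assumes mt: "is_matching n M"
  shows "young n M = Yd n (\<lambda>i. int (mxs M ! i))"
proof (rule Set.set_eqI)
  fix x :: "nat \<times> nat"
  obtain r c where x: "x = (r, c)" by (cases x)
  have "1 \<le> r \<Longrightarrow> r \<le> n \<Longrightarrow> opener M (n + 1 - r) = mxs M ! (n - r)"
    unfolding opener_def mxs_def[OF mt] by (simp add: Suc_diff_le)
  moreover have "1 \<le> r \<Longrightarrow> r \<le> n \<Longrightarrow> int (mxs M ! (n - r)) \<ge> int (n - r) + 1"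
    using xs_ge[OF mt, of "n - r"] by simp
  ultimately show "x \<in> young n M \<longleftrightarrow> x \<in> Yd n (\<lambda>i. int (mxs M ! i))"
    unfolding x young_def Yd_mem by (auto simp: of_nat_diff)
qed

lemma sign_split:
  fixes a b :: nat
  shows "(-1::int) ^ a = (-1) ^ (a + b) * (-1) ^ b"
proof -
  have "(-1::int) ^ (a + b) * (-1) ^ b = (-1) ^ a * ((-1) ^ b * (-1) ^ b)" by (simp add: power_add)
  also have "(-1::int) ^ b * (-1) ^ b = 1" by (simp flip: power_add add: power_mult[symmetric])
  finally show ?thesis by simp
qed

theorem theorem6p5:
  fixes n :: nat and M :: "(nat \<times> nat) set" and p :: int
  assumes "is_matching n M"
  shows "(p \<ge> 0 \<longrightarrow>
            Dpi n M p = int (card (strict_fillings (young n M) 1 (p + int n - 1))) \<and> Dpi n M p > 0)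
       \<and> (p \<le> - int n \<longrightarrow>
            (-1) ^ dpi n M * Dpi n M p = int (card (weak_fillings (young n M) 0 (\<bar>p\<bar> - int n)))
            \<and> Dpi n M p \<noteq> 0)
       \<and> Dpi n M (- int n) = (-1) ^ dpi n M
       \<and> (1 - int n \<le> p \<and> p \<le> -1 \<and>
            \<not> (\<exists>m \<rho>. is_matching m \<rho> \<and> M = surround (nat \<bar>p\<bar>) m \<rho>)
            \<longrightarrow> Dpi n M p = 0)"
proof -
  note mt = assms
  define A where "A = (\<lambda>i. int (mxs M ! i))"
  have incA: "inc n A" unfolding A_def by (rule xs_inc[OF mt])
  have Y: "young n M = Yd n A" unfolding A_def by (rule young_Yd[OF mt])
  have Ybd: "\<And>r c. (r, c) \<in> Yd n A \<Longrightarrow> r + c \<le> n"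
  proof -
    fix r c assume rc: "(r, c) \<in> Yd n A"
    then have r: "1 \<le> r" "r \<le> n" "int c \<le> A (n - r) - int (n - r) - 1" by (auto simp: Yd_mem)
    have "mxs M ! (n - r) \<le> 2 * (n - r) + 1" by (rule xs_bound[OF mt]) (use r in simp)
    then show "r + c \<le> n" using r unfolding A_def by (simp add: of_nat_diff)
  qed
  have partI: "\<And>q. q \<ge> 0 \<Longrightarrow> Dpi n M q = int (card (strict_fillings (young n M) 1 (q + int n - 1))) \<and> Dpi n M q > 0"
  proof -
    fix q :: int assume q: "q \<ge> 0"
    define t where "t = (\<lambda>i::nat. q + int i)"
    have st: "stepU n t" unfolding stepU_def t_def using q by auto
    have G: "Dpi n M q = int (card (SFt n A t))"
      using strict_main[OF incA st] Dpi_Gd[OF mt] unfolding A_def t_def by simp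
    have SE: "SFt n A t = strict_fillings (young n M) 1 (q + int n - 1)"
    proof -
      have "\<And>x. x \<in> Yd n A \<Longrightarrow> t (n - fst x) + int (fst x) - 1 = q + int n - 1"
        unfolding t_def by (auto simp: Yd_mem of_nat_diff)
      then show ?thesis unfolding SFt_def strict_fillings_def Y
        by (intro Collect_cong conj_cong refl) (simp add: Ball_def)
    qed
    define f0 where "f0 = (\<lambda>x::nat\<times>nat. if x \<in> Yd n A then int (fst x + snd x) - 1 else 0)"
    have "f0 \<in> SFt n A t"
    proof -
      have "\<forall>x\<in>Yd n A. f0 x \<in> {1 .. t (n - fst x) + int (fst x) - 1}"
      proof
        fix x assume x: "x \<in> Yd n A"
        obtain r c where xe: "x = (r,c)" by (cases x)
        have "r + c \<le> n" "1 \<le> r" "1 \<le> c" "r \<le> n" using Ybd x xe by (auto simp: Yd_mem)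
        then show "f0 x \<in> {1 .. t (n - fst x) + int (fst x) - 1}"
          using x xe q unfolding f0_def t_def by (simp add: of_nat_diff)
      qed
      then show ?thesis unfolding SFt_def f0_def by auto
    qed
    then have "card (SFt n A t) > 0" using SFt_finite card_gt_0_iff by blast
    then show "Dpi n M q = int (card (strict_fillings (young n M) 1 (q + int n - 1))) \<and> Dpi n M q > 0"
      using G SE by simp
  qed
  have partII: "\<And>q. q \<le> - int n \<Longrightarrow>
      (-1) ^ dpi n M * Dpi n M q = int (card (weak_fillings (young n M) 0 (\<bar>q\<bar> - int n)))"
  proof -
    fix q :: int assume q: "q \<le> - int n"
    define t where "t = (\<lambda>i::nat. - q - int i)"
    have st: "stepD n t" unfolding stepD_def t_def using q by auto
    have Hw: "Hd n A t = int (card (WFt n A t))" by (rule weak_main[OF incA st])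
    have WE: "WFt n A t = weak_fillings (young n M) 0 (\<bar>q\<bar> - int n)"
    proof -
      have "\<And>x. x \<in> Yd n A \<Longrightarrow> t (n - fst x) - int (fst x) = \<bar>q\<bar> - int n"
        unfolding t_def using q by (auto simp: Yd_mem of_nat_diff)
      then show ?thesis unfolding WFt_def weak_fillings_def Y
        by (intro Collect_cong conj_cong refl) (simp add: Ball_def)
    qed
    define c where "c = (\<lambda>i::nat. (-1::int) ^ (mxs M ! i))"
    define d where "d = (\<lambda>j::nat. (-1::int) ^ (j + 1))"
    have ent: "\<And>i j. i < n \<Longrightarrow> j < n \<Longrightarrow> gbin (q + int i) (A i - int (j + 1)) =
        c i * d j * gbin (t i + (A i - int (j+1)) - 1) (A i - int (j+1))"
    proof -
      fix i j assume ij: "i < n" "j < n"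
      show "gbin (q + int i) (A i - int (j + 1)) = c i * d j * gbin (t i + (A i - int (j+1)) - 1) (A i - int (j+1))"
      proof (cases "A i - int (j + 1) < 0")
        case True then show ?thesis by simp
      next
        case False
        define m where "m = nat (A i - int (j + 1))"
        have m: "A i - int (j + 1) = int m" using False unfolding m_def by simp
        have xsm: "mxs M ! i = m + (j + 1)" using m unfolding A_def by simp
        have "gbin (q + int i) (int m) = (-1) ^ m * gbin (int m - (q + int i) - 1) (int m)"
          by (rule gbin_negtop)
        moreover have "(-1::int) ^ m = c i * d j" unfolding c_def d_def xsm by (rule sign_split)
        moreover have "int m - (q + int i) - 1 = t i + int m - 1" unfolding t_def by simp
        ultimately show ?thesis unfolding m by simp
      qed
    qed
    have "Dpi n M q = detf n (\<lambda>i j. c i * d j * gbin (t i + (A i - int (j+1)) - 1) (A i - int (j+1)))"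
      unfolding Dpi_Gd[OF mt] Gd_def A_def[symmetric] by (rule detf_cong) (rule ent)
    also have "\<dots> = (\<Prod>i<n. c i) * (\<Prod>j<n. d j) * Hd n A t"
      unfolding Hd_def by (rule detf_scale)
    finally have D: "Dpi n M q = (\<Prod>i<n. c i) * (\<Prod>j<n. d j) * Hd n A t" .
    have pc: "(\<Prod>i<n. c i) = (-1) ^ (\<Sum>i<n. mxs M ! i)" unfolding c_def by (simp add: power_sum)
    have pd: "(\<Prod>j<n. d j) = (-1) ^ (\<Sum>j<n. j + 1)" unfolding d_def by (simp add: power_sum)
    have dp: "dpi n M = (\<Sum>i<n. mxs M ! i - (i + 1))"
      unfolding dpi_def opener_def mxs_def[OF mt]
      by (rule sum.reindex_bij_witness[of _ Suc "\<lambda>i. i - 1"]) auto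
    have sumeq: "(\<Sum>i<n. mxs M ! i) = dpi n M + (\<Sum>j<n. j + 1)"
    proof -
      have "(\<Sum>i<n. mxs M ! i) = (\<Sum>i<n. (mxs M ! i - (i + 1)) + (i + 1))"
      proof (rule sum.cong)
        fix x assume "x \<in> {..<n}"
        then have "int x + 1 \<le> int (mxs M ! x)" using xs_ge[OF mt, of x] by simp
        then show "mxs M ! x = (mxs M ! x - (x + 1)) + (x + 1)" by simp
      qed simp
      also have "\<dots> = (\<Sum>i<n. mxs M ! i - (i + 1)) + (\<Sum>j<n. j + 1)" by (rule sum.distrib)
      finally show ?thesis unfolding dp .
    qed
    have sgn: "(\<Prod>i<n. c i) * (\<Prod>j<n. d j) = (-1) ^ dpi n M"
      unfolding pc pd sumeq using sign_split[of "dpi n M" "\<Sum>j<n. j + 1"] by simp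
    have sq: "((-1::int) ^ dpi n M) * ((-1) ^ dpi n M) = 1"
      by (simp flip: power_add add: power_mult[symmetric])
    have "(-1) ^ dpi n M * Dpi n M q = Hd n A t"
      unfolding D sgn[symmetric] using sgn sq by (simp add: mult.assoc[symmetric])
    then show "(-1) ^ dpi n M * Dpi n M q = int (card (weak_fillings (young n M) 0 (\<bar>q\<bar> - int n)))"
      using Hw WE by simp
  qed
  have weak_pos: "\<And>q. q \<le> - int n \<Longrightarrow> card (weak_fillings (young n M) 0 (\<bar>q\<bar> - int n)) > 0"
  proof -
    fix q :: int assume q: "q \<le> - int n"
    have "(\<lambda>_. 0) \<in> weak_fillings (young n M) 0 (\<bar>q\<bar> - int n)"
      unfolding weak_fillings_def using q by auto
    moreover have "finite (weak_fillings (young n M) 0 (\<bar>q\<bar> - int n))"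
    proof (rule finite_subset)
      show "weak_fillings (young n M) 0 (\<bar>q\<bar> - int n) \<subseteq>
        {f. (\<forall>x. x \<notin> young n M \<longrightarrow> f x = (0::int)) \<and> (\<forall>x\<in>young n M. f x \<in> {0..\<bar>q\<bar> - int n})}"
        unfolding weak_fillings_def by blast
      show "finite {f. (\<forall>x. x \<notin> young n M \<longrightarrow> f x = (0::int)) \<and> (\<forall>x\<in>young n M. f x \<in> {0..\<bar>q\<bar> - int n})}"
        by (rule finite_bounded_funs) (auto simp: Y Yd_finite)
    qed
    ultimately show "card (weak_fillings (young n M) 0 (\<bar>q\<bar> - int n)) > 0"
      using card_gt_0_iff by blast
  qed
  have sq: "((-1::int) ^ dpi n M) * ((-1) ^ dpi n M) = 1"
    by (simp flip: power_add add: power_mult[symmetric])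
  have c2: "p \<le> - int n \<longrightarrow>
            (-1) ^ dpi n M * Dpi n M p = int (card (weak_fillings (young n M) 0 (\<bar>p\<bar> - int n)))
            \<and> Dpi n M p \<noteq> 0"
  proof
    assume p: "p \<le> - int n"
    have e: "(-1) ^ dpi n M * Dpi n M p = int (card (weak_fillings (young n M) 0 (\<bar>p\<bar> - int n)))"
      by (rule partII[OF p])
    moreover have "Dpi n M p \<noteq> 0" using e weak_pos[OF p] by auto
    ultimately show "(-1) ^ dpi n M * Dpi n M p = int (card (weak_fillings (young n M) 0 (\<bar>p\<bar> - int n)))
            \<and> Dpi n M p \<noteq> 0" by simp
  qed
  have c3: "Dpi n M (- int n) = (-1) ^ dpi n M"
  proof -
    have "weak_fillings (young n M) 0 (\<bar>- int n\<bar> - int n) = {\<lambda>_. 0}"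
      unfolding weak_fillings_def by (auto intro!: ext)
    then have "(-1) ^ dpi n M * Dpi n M (- int n) = 1" using partII[of "- int n"] by simp
    then have "((-1) ^ dpi n M) * ((-1) ^ dpi n M * Dpi n M (- int n)) = (-1) ^ dpi n M" by simp
    then show ?thesis using sq by (simp add: mult.assoc[symmetric])
  qed
  have c4: "1 - int n \<le> p \<and> p \<le> -1 \<and>
            \<not> (\<exists>m \<rho>. is_matching m \<rho> \<and> M = surround (nat \<bar>p\<bar>) m \<rho>)
            \<longrightarrow> Dpi n M p = 0"
  proof
    assume a: "1 - int n \<le> p \<and> p \<le> -1 \<and> \<not> (\<exists>m \<rho>. is_matching m \<rho> \<and> M = surround (nat \<bar>p\<bar>) m \<rho>)"
    define s where "s = nat \<bar>p\<bar>"
    have s: "1 \<le> s" "s < n" "p = - int s" using a unfolding s_def by auto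
    have "\<exists>k. s \<le> k \<and> k < n \<and> \<not> mxs M ! k \<le> 2 * k + 1 - s"
    proof (rule ccontr)
      assume "\<not> ?thesis"
      then have "\<And>k. s \<le> k \<Longrightarrow> k < n \<Longrightarrow> mxs M ! k \<le> 2 * k + 1 - s" by blast
      then have "\<exists>m \<rho>. is_matching m \<rho> \<and> M = surround s m \<rho>" by (rule surround_ex[OF mt s(1) s(2)])
      then show False using a unfolding s_def by blast
    qed
    then obtain k where k: "s \<le> k" "k < n" "mxs M ! k > 2 * k + 1 - s" by auto
    have Ak: "A k > 2 * int k + 1 - int s" using k unfolding A_def by auto
    show "Dpi n M p = 0"
      unfolding Dpi_Gd[OF mt] Gd_def A_def[symmetric]
    proof (rule detf_pigeon[OF k(2)])
      fix i j assume ij: "k \<le> i" "i < n" "j \<le> k"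
      have "A k - int k \<le> A i - int i" by (rule inc_Lmono[OF incA ij(1) ij(2)])
      then have "p + int i < A i - int (j + 1)" using Ak ij s(3) by simp
      moreover have "0 \<le> p + int i" using ij k s(3) by simp
      ultimately show "gbin (p + int i) (A i - int (j + 1)) = 0" by (rule gbin_zero_big[rotated])
    qed
  qed
  show ?thesis using partI c2 c3 c4 by blast
qed


end
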